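(* Let $0<\varepsilon<\frac12$, $c=(1-\varepsilon)^{1/h}(b_1\cdots b_h)^{1/h^2}/\Gamma(1/h)$, and let $\mathscr{A}$ be the random set with $0\in\mathscr{A}$ and mutually independent events $\{n\in\mathscr{A}\}$ ($n\ge1$) of probability $\min\{c(n\log n)^{1/h}/n,1\}$. For an integer $n\ge1$, let $\mathcal{S}[n]$ be the collection of distinct sets $\{k_1,\dots,k_h\}$ arising from tuples $(k_1,\dots,k_h)\in\mathbb{Z}_{\ge0}^h$ with $b_1k_1+\cdots+b_hk_h=n$. For integers $m>n\ge2$ define \[ \Delta(n,m):=\sum_{\substack{R\ne S\in\mathcal{S}[n]\\ R\cap S\ne\varnothing}}\Pr(R\cup S\subseteq\mathscr{A})+2\sum_{\substack{R\in\mathcal{S}[n],\,S\in\mathcal{S}[m]\\ R\cap S\ne\varnothing}}\Pr(R\cup S\subseteq\mathscr{A})+\sum_{\substack{R\ne S\in\mathcal{S}[m]\\ R\cap S\ne\varnothing}}\Pr(R\cup S\subseteq\mathscr{A}), \] where the first and last sums are over ordered pairs of distinct sets. Then for every $\eta>0$ there is a constant $K_\eta$ such that for all integers $m>n\ge2$, \[ \Delta(n,m)\le K_\eta\Big[\big(1+(m-n)^{-1/h+\eta}\big)\,n^{-1/h+\eta}+m^{-1/h+\eta}\Big]. \]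
   Context: Fix an integer $h\ge 2$ and positive integers $b_1,\dots,b_h$, not necessarily distinct, with $\gcd(b_1,\dots,b_h)=1$. *)

theory Defs
  imports "HOL-Probability.Probability"
begin

text \<open>Parameters: h, weights b 0, ..., b (h-1) (the paper's b_1..b_h), and epsilon.\<close>

definition cconst :: "nat \<Rightarrow> (nat \<Rightarrow> nat) \<Rightarrow> real \<Rightarrow> real" where
  "cconst h b \<epsilon> = (1 - \<epsilon>) powr (1 / real h) * (real (\<Prod>i<h. b i)) powr (1 / (real h)^2)
      / Gamma (1 / real h)"

definition pr_in :: "nat \<Rightarrow> (nat \<Rightarrow> nat) \<Rightarrow> real \<Rightarrow> nat \<Rightarrow> real" where
  "pr_in h b \<epsilon> n = (if n = 0 then 1 else
      min (cconst h b \<epsilon> * (real n * ln (real n)) powr (1 / real h) / real n) 1)"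

text \<open>The random set: omega x is the event "x is in the set"; independent Bernoulli coordinates.\<close>
definition randset :: "nat \<Rightarrow> (nat \<Rightarrow> nat) \<Rightarrow> real \<Rightarrow> (nat \<Rightarrow> bool) measure" where
  "randset h b \<epsilon> = (\<Pi>\<^sub>M x\<in>(UNIV::nat set). measure_pmf (bernoulli_pmf (pr_in h b \<epsilon> x)))"

definition Pr_sub :: "nat \<Rightarrow> (nat \<Rightarrow> nat) \<Rightarrow> real \<Rightarrow> nat set \<Rightarrow> real" where
  "Pr_sub h b \<epsilon> T = measure (randset h b \<epsilon>) {\<omega> \<in> space (randset h b \<epsilon>). \<forall>x\<in>T. \<omega> x}"

definition Sset :: "nat \<Rightarrow> (nat \<Rightarrow> nat) \<Rightarrow> nat \<Rightarrow> nat set set" where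
  "Sset h b n = {k ` {..<h} | k :: nat \<Rightarrow> nat. (\<Sum>i<h. b i * k i) = n}"

definition Delta :: "nat \<Rightarrow> (nat \<Rightarrow> nat) \<Rightarrow> real \<Rightarrow> nat \<Rightarrow> nat \<Rightarrow> real" where
  "Delta h b \<epsilon> n m =
     (\<Sum>(R, S) \<in> {(R, S). R \<in> Sset h b n \<and> S \<in> Sset h b n \<and> R \<noteq> S \<and> R \<inter> S \<noteq> {}}.
         Pr_sub h b \<epsilon> (R \<union> S))
   + 2 * (\<Sum>(R, S) \<in> {(R, S). R \<in> Sset h b n \<and> S \<in> Sset h b m \<and> R \<inter> S \<noteq> {}}.
         Pr_sub h b \<epsilon> (R \<union> S))
   + (\<Sum>(R, S) \<in> {(R, S). R \<in> Sset h b m \<and> S \<in> Sset h b m \<and> R \<noteq> S \<and> R \<inter> S \<noteq> {}}.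
         Pr_sub h b \<epsilon> (R \<union> S))"

end

theory Submission
  imports Defs "HOL-Library.Multiset" "HOL-Library.FuncSet"
begin

lemma mvt_step:
  fixes s y :: real assumes "0 < s" "s \<le> 1" "y \<ge> 1"
  shows "s * (y + 1) powr (s - 1) \<le> (y + 1) powr s - y powr s"
proof -
  have der: "\<And>x. y \<le> x \<Longrightarrow> x \<le> y + 1 \<Longrightarrow> ((\<lambda>x. x powr s) has_real_derivative s * x powr (s - 1)) (at x)"
    using assms by (intro has_real_derivative_powr) auto
  obtain z where z: "y < z" "z < y + 1" "(y+1) powr s - y powr s = ((y+1) - y) * (s * z powr (s - 1))"
    using MVT2[of y "y+1" "\<lambda>x. x powr s" "\<lambda>x. s * x powr (s - 1)", OF _ der] by auto
  have "(y+1) powr (s-1) \<le> z powr (s - 1)"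
    using z assms by (intro powr_mono2') auto
  then show ?thesis using z assms by simp
qed

lemma power_sum_neg:
  fixes e :: real assumes "-1 < e" "e \<le> 0"
  shows "(\<Sum>x\<le>N. (real x + 1) powr e) \<le> (real N + 1) powr (1 + e) / (1 + e)"
proof (induction N)
  case 0
  then show ?case using assms by (simp add: field_simps)
next
  case (Suc N)
  have "(\<Sum>x\<le>Suc N. (real x + 1) powr e) \<le> (real N + 1) powr (1 + e) / (1 + e) + (real N + 2) powr e"
    using Suc by (simp add: add_ac)
  also have "\<dots> \<le> (real N + 2) powr (1 + e) / (1 + e)"
  proof -
    have "(1+e) * ((real N + 1) + 1) powr ((1+e) - 1) \<le> ((real N + 1) + 1) powr (1+e) - (real N + 1) powr (1+e)"
      using assms by (intro mvt_step) auto
    then have "(1+e) * (real N + 2) powr e \<le> (real N + 2) powr (1+e) - (real N + 1) powr (1+e)"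
      by (simp add: add_ac)
    then have "(real N + 2) powr e \<le> ((real N + 2) powr (1+e) - (real N + 1) powr (1+e)) / (1 + e)"
      using assms by (simp add: pos_le_divide_eq mult.commute)
    then show ?thesis by (simp add: diff_divide_distrib)
  qed
  finally show ?case by (simp add: add_ac)
qed

lemma power_sum:
  fixes e :: real assumes "-1 < e"
  shows "(\<Sum>x\<le>N. (real x + 1) powr e) \<le> (1 + 1 / (1 + e)) * (real N + 1) powr (1 + e)"
proof -
  have pos: "0 \<le> (real N + 1) powr (1 + e)" by simp
  have i: "0 \<le> 1 / (1 + e)" using assms by simp
  show ?thesis
  proof (cases "e \<le> 0")
    case True
    have "(\<Sum>x\<le>N. (real x + 1) powr e) \<le> (real N + 1) powr (1 + e) / (1 + e)"
      using power_sum_neg[OF assms True] .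
    also have "\<dots> \<le> (1 + 1 / (1 + e)) * (real N + 1) powr (1 + e)"
      using pos by (simp add: distrib_right)
    finally show ?thesis .
  next
    case False
    have "(\<Sum>x\<le>N. (real x + 1) powr e) \<le> (\<Sum>x\<le>N. (real N + 1) powr e)"
      using False by (intro sum_mono powr_mono2) auto
    also have "\<dots> = (real N + 1) powr (1 + e)"
      by (simp add: powr_add)
    also have "\<dots> \<le> (1 + 1 / (1 + e)) * (real N + 1) powr (1 + e)"
      using pos i by (simp add: distrib_right)
    finally show ?thesis .
  qed
qed

lemma sum_le_inj:
  fixes f :: "'a \<Rightarrow> real" and F :: "'b \<Rightarrow> real"
  assumes "finite T" "inj_on g S" "g ` S \<subseteq> T" "\<And>s. s \<in> S \<Longrightarrow> f s \<le> F (g s)" "\<And>t. t \<in> T \<Longrightarrow> 0 \<le> F t"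
  shows "sum f S \<le> sum F T"
proof (cases "finite S")
  case True
  have "sum f S \<le> sum (F \<circ> g) S" using assms(4) by (intro sum_mono) auto
  also have "\<dots> = sum F (g ` S)" by (simp add: sum.reindex[OF assms(2)])
  also have "\<dots> \<le> sum F T" using assms by (intro sum_mono2) auto
  finally show ?thesis .
next
  case False
  then show ?thesis using assms by (simp add: sum_nonneg)
qed

lemma two_pow_bound:
  fixes u v E :: real assumes "0 < u" "v \<le> 2 * u" "u \<le> v"
  shows "u powr E \<le> 2 powr \<bar>E\<bar> * v powr E"
proof (cases "E \<ge> 0")
  case True
  have "u powr E \<le> v powr E" using assms True by (intro powr_mono2) auto
  also have "\<dots> = 1 * v powr E" by simp
  also have "\<dots> \<le> 2 powr \<bar>E\<bar> * v powr E" by (intro mult_right_mono ge_one_powr_ge_zero) auto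
  finally show ?thesis .
next
  case False
  have "u powr E \<le> (v / 2) powr E" using assms False by (intro powr_mono2') auto
  also have "\<dots> = v powr E / 2 powr E" using assms by (simp add: powr_divide)
  also have "\<dots> = 2 powr \<bar>E\<bar> * v powr E" using False
    by (simp add: powr_minus field_simps)
  finally show ?thesis .
qed

lemma conv:
  fixes a E :: real and j N :: nat
  assumes a: "0 \<le> a" "a < 1" and E: "-1 < E" and j: "1 \<le> j"
  shows "(\<Sum>x\<in>{x. j*x \<le> N}. (real x + 1) powr (-a) * (real (N - j*x) + 1) powr E)
     \<le> (2 powr \<bar>E\<bar> * (1 + 1/(1-a)) + (2*real j) powr a * (1 + 1/(1+E))) * (real N + 1) powr (1 - a + E)"
proof -
  let ?S = "{x. j*x \<le> N}"
  have Ssub: "?S \<subseteq> {..N}"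
  proof
    fix x assume "x \<in> ?S" then have "j*x \<le> N" by simp
    have "x \<le> j*x" using j by simp
    have "x \<le> N" using \<open>x \<le> j*x\<close> \<open>j*x \<le> N\<close> by (rule le_trans)
    then show "x \<in> {..N}" by simp
  qed
  have finS: "finite ?S" by (rule finite_subset[OF Ssub]) auto
  let ?A = "2 powr \<bar>E\<bar> * (real N + 1) powr E"
  let ?B = "(2*real j) powr a * (real N + 1) powr (-a)"
  have tm: "(real x + 1) powr (-a) * (real (N - j*x) + 1) powr E
      \<le> ?A * (real x + 1) powr (-a) + ?B * (real (N - j*x) + 1) powr E" if "x \<in> ?S" for x
  proof (cases "2*j*x \<le> N")
    case True
    have "(real (N - j*x) + 1) powr E \<le> 2 powr \<bar>E\<bar> * (real N + 1) powr E"
    proof (rule two_pow_bound)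
      have d: "real (N - j*x) = real N - real (j*x)" using that by (simp add: of_nat_diff)
      have "real (2*j*x) \<le> real N" using True by (simp only: of_nat_le_iff)
      then have t: "2 * real (j*x) \<le> real N" by simp
      show "0 < real (N - j*x) + 1" by simp
      show "real N + 1 \<le> 2 * (real (N - j*x) + 1)" unfolding d using t by (smt (verit))
      show "real (N - j*x) + 1 \<le> real N + 1" using d by simp
    qed
    then have "(real x + 1) powr (-a) * (real (N - j*x) + 1) powr E \<le> ?A * (real x + 1) powr (-a)"
      using mult_left_mono[OF \<open>(real (N - j*x) + 1) powr E \<le> 2 powr \<bar>E\<bar> * (real N + 1) powr E\<close>, of "(real x + 1) powr (-a)"]
      by (simp add: mult_ac)
    moreover have "0 \<le> ?B * (real (N - j*x) + 1) powr E" by simp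
    ultimately show ?thesis by linarith
  next
    case False
    have jpos: "real j > 0" using j by simp
    have "N < 2*j*x" using False by simp
    then have "N + 1 \<le> 2*j*x + 2*j" using j by linarith
    then have "real (N+1) \<le> real (2*j*x + 2*j)" by (simp only: of_nat_le_iff)
    then have "real N + 1 \<le> 2 * real j * (real x + 1)" by (simp add: distrib_left)
    then have "(real N + 1) / (2 * real j) \<le> real x + 1"
      using jpos by (simp add: divide_le_eq mult.commute)
    then have "(real x + 1) powr (-a) \<le> ((real N + 1) / (2 * real j)) powr (-a)"
      using a jpos by (intro powr_mono2') auto
    also have "\<dots> = (real N + 1) powr (-a) / (2 * real j) powr (-a)"
      using jpos by (simp add: powr_divide)
    also have "\<dots> = (2*real j) powr a * (real N + 1) powr (-a)"
      by (simp add: powr_minus field_simps)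
    finally have "(real x + 1) powr (-a) * (real (N - j*x) + 1) powr E \<le> ?B * (real (N - j*x) + 1) powr E"
      by (rule mult_right_mono) simp
    moreover have "0 \<le> ?A * (real x + 1) powr (-a)" by simp
    ultimately show ?thesis by linarith
  qed
  have "(\<Sum>x\<in>?S. (real x + 1) powr (-a) * (real (N - j*x) + 1) powr E)
      \<le> (\<Sum>x\<in>?S. ?A * (real x + 1) powr (-a) + ?B * (real (N - j*x) + 1) powr E)"
    using tm by (intro sum_mono) auto
  also have "\<dots> = ?A * (\<Sum>x\<in>?S. (real x + 1) powr (-a)) + ?B * (\<Sum>x\<in>?S. (real (N - j*x) + 1) powr E)"
    by (simp add: sum.distrib sum_distrib_left)
  also have "\<dots> \<le> ?A * ((1 + 1/(1-a)) * (real N + 1) powr (1 - a)) + ?B * ((1 + 1/(1+E)) * (real N + 1) powr (1 + E))"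
  proof (intro add_mono mult_left_mono)
    have "(\<Sum>x\<in>?S. (real x + 1) powr (-a)) \<le> (\<Sum>x\<le>N. (real x + 1) powr (-a))"
      using Ssub by (intro sum_mono2) auto
    also have "\<dots> \<le> (1 + 1/(1-a)) * (real N + 1) powr (1 - a)"
      using power_sum[of "-a" N] a by simp
    finally show "(\<Sum>x\<in>?S. (real x + 1) powr (-a)) \<le> (1 + 1/(1-a)) * (real N + 1) powr (1 - a)" .
    have "(\<Sum>x\<in>?S. (real (N - j*x) + 1) powr E) \<le> (\<Sum>y\<le>N. (real y + 1) powr E)"
    proof (rule sum_le_inj[where g = "\<lambda>x. N - j*x"])
      show "inj_on (\<lambda>x. N - j * x) ?S"
      proof (rule inj_onI)
        fix x y assume "x \<in> ?S" "y \<in> ?S" "N - j * x = N - j * y"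
        then have "j*x = j*y" by (metis diff_diff_cancel mem_Collect_eq)
        then show "x = y" using j by simp
      qed
    qed auto
    also have "\<dots> \<le> (1 + 1/(1+E)) * (real N + 1) powr (1 + E)"
      using power_sum[OF E] .
    finally show "(\<Sum>x\<in>?S. (real (N - j*x) + 1) powr E) \<le> (1 + 1/(1+E)) * (real N + 1) powr (1 + E)" .
  qed auto
  also have "\<dots> = (2 powr \<bar>E\<bar> * (1 + 1/(1-a)) + (2*real j) powr a * (1 + 1/(1+E))) * (real N + 1) powr (1 - a + E)"
  proof -
    have e1: "(real N+1) powr E * (real N+1) powr (1-a) = (real N + 1) powr (1-a+E)"
      by (subst powr_add[symmetric]) (simp add: add_ac)
    have e2: "(real N+1) powr (-a) * (real N+1) powr (1+E) = (real N + 1) powr (1-a+E)"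
      by (subst powr_add[symmetric]) (simp add: add_ac)
    have "?A * ((1 + 1/(1-a)) * (real N + 1) powr (1 - a)) + ?B * ((1 + 1/(1+E)) * (real N + 1) powr (1 + E))
       = 2 powr \<bar>E\<bar> * (1 + 1/(1-a)) * ((real N+1) powr E * (real N+1) powr (1-a))
         + (2*real j) powr a * (1 + 1/(1+E)) * ((real N+1) powr (-a) * (real N+1) powr (1+E))"
      by (simp only: mult_ac)
    then show ?thesis unfolding e1 e2 by (simp add: distrib_right)
  qed
  finally show ?thesis .
qed

definition ww :: "real \<Rightarrow> nat \<Rightarrow> real" where "ww a x = (real x + 1) powr (-a)"
definition Fin :: "nat \<Rightarrow> nat \<Rightarrow> nat multiset set" where
  "Fin B N = {M. set_mset M \<subseteq> {..N} \<and> (\<forall>x. count M x \<le> B)}"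
definition DD :: "nat \<Rightarrow> nat \<Rightarrow> nat \<Rightarrow> nat multiset set" where
  "DD B N r = {M \<in> Fin B N. card (set_mset M) = r \<and> sum_mset M \<le> N}"
definition SL :: "nat \<Rightarrow> real \<Rightarrow> nat \<Rightarrow> nat \<Rightarrow> real \<Rightarrow> real" where
  "SL B a N r g = (\<Sum>M\<in>DD B N r. (\<Prod>x\<in>set_mset M. ww a x) * (real (N - sum_mset M) + 1) powr g)"

lemma ww_nonneg: "0 \<le> ww a x" by (simp add: ww_def)
lemma ww_le1: "0 \<le> a \<Longrightarrow> ww a x \<le> 1"
proof -
  assume "0 \<le> a"
  then have "(real x + 1) powr (-a) \<le> 1 powr (-a)" by (intro powr_mono2') auto
  then show ?thesis unfolding ww_def by simp
qed

lemma finite_Fin: "finite (Fin B N)"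
proof -
  have "count ` Fin B N \<subseteq> {f. \<forall>x. (x \<in> {..N} \<longrightarrow> f x \<in> {..B}) \<and> (x \<notin> {..N} \<longrightarrow> f x = 0)}"
    unfolding Fin_def by (auto simp: not_in_iff[symmetric])
  then have "finite (count ` Fin B N)"
    by (rule finite_subset) (intro finite_set_of_finite_funs; simp)
  moreover have "inj_on count (Fin B N)" by (auto intro!: inj_onI multiset_eqI)
  ultimately show ?thesis by (rule finite_imageD)
qed

lemma finite_DD: "finite (DD B N r)"
  unfolding DD_def using finite_Fin by simp

lemma mem_le_sum_mset: "y \<in># M \<Longrightarrow> y \<le> sum_mset (M :: nat multiset)"
  by (metis le_add1 multi_member_split sum_mset.add_mset)

lemma DD_0: "DD B N 0 = {{#}}"
  unfolding DD_def Fin_def by auto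

lemma SL_0: "SL B a N 0 g = (real N + 1) powr g"
  unfolding SL_def DD_0 by simp

lemma split_elem: "M = filter_mset (\<lambda>y. y \<noteq> x) M + replicate_mset (count M x) x"
  by (rule multiset_eqI) auto

lemma sum_split_elem: "sum_mset M = sum_mset (filter_mset (\<lambda>y. y \<noteq> x) M) + count M x * (x::nat)"
  by (subst split_elem[of M x]) (simp add: sum_mset.union)

lemma SL_red:
  assumes B: "1 \<le> B"
  shows "SL B a N (Suc r) g \<le> (\<Sum>j\<in>{1..B}. \<Sum>x\<in>{x. j*x \<le> N}. ww a x * SL B a (N - j*x) r g)"
proof -
  let ?f = "\<lambda>M. (\<Prod>x\<in>set_mset M. ww a x) * (real (N - sum_mset M) + 1) powr g"
  let ?D = "DD B N (Suc r)"
  let ?T = "Sigma {1..B} (\<lambda>j. Sigma {x. j*x \<le> N} (\<lambda>x. DD B (N - j*x) r))"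
  let ?F = "\<lambda>(j,x,M'). ww a x * ((\<Prod>y\<in>set_mset M'. ww a y) * (real (N - j*x - sum_mset M') + 1) powr g)"
  let ?G = "\<lambda>(M,x). (count M x, x, filter_mset (\<lambda>y. y \<noteq> x) M)"
  have fnonneg: "0 \<le> ?f M" for M by (simp add: prod_nonneg ww_nonneg)
  have finx: "finite {x. j*x \<le> N}" if "j \<in> {1..B}" for j
    by (rule finite_subset[of _ "{..N}"]) (use that in \<open>auto intro: le_trans[rotated]\<close>)
  have "SL B a N (Suc r) g = (\<Sum>M\<in>?D. ?f M)" unfolding SL_def ..
  also have "\<dots> \<le> (\<Sum>M\<in>?D. \<Sum>x\<in>set_mset M. ?f M)"
  proof (rule sum_mono)
    fix M assume "M \<in> ?D"
    then have "card (set_mset M) = Suc r" unfolding DD_def by simp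
    then show "?f M \<le> (\<Sum>x\<in>set_mset M. ?f M)" using fnonneg[of M]
      by (simp add: mult_le_cancel_right1 algebra_simps)
  qed
  also have "\<dots> = (\<Sum>(M,x)\<in>Sigma ?D set_mset. ?f M)"
    by (rule sum.Sigma) (auto simp: finite_DD)
  also have "\<dots> \<le> sum ?F ?T"
  proof (rule sum_le_inj[where g = ?G])
    show "finite ?T" using finx by (auto intro!: finite_SigmaI finite_DD)
    show "inj_on ?G (Sigma ?D set_mset)"
    proof (rule inj_onI)
      fix p q assume "p \<in> Sigma ?D set_mset" "q \<in> Sigma ?D set_mset" "?G p = ?G q"
      then show "p = q"
        by (cases p, cases q) (auto, metis split_elem)
    qed
    show "?G ` Sigma ?D set_mset \<subseteq> ?T"
    proof (rule image_subsetI)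
      fix p assume "p \<in> Sigma ?D set_mset"
      then obtain M x where p: "p = (M,x)" and M: "M \<in> ?D" and x: "x \<in># M" by auto
      let ?M' = "filter_mset (\<lambda>y. y \<noteq> x) M"
      have s: "sum_mset M = sum_mset ?M' + count M x * x" by (rule sum_split_elem)
      have sN: "sum_mset M \<le> N" and cB: "\<And>y. count M y \<le> B" and cM: "card (set_mset M) = Suc r"
        using M unfolding DD_def Fin_def by auto
      have c1: "1 \<le> count M x" using x by (simp add: Suc_le_eq)
      have "count M x * x \<le> N" using s sN by linarith
      moreover have "?M' \<in> DD B (N - count M x * x) r"
      proof -
        have "sum_mset ?M' \<le> N - count M x * x" using s sN by linarith
        moreover have "set_mset ?M' \<subseteq> {..N - count M x * x}"
          using mem_le_sum_mset[of _ ?M'] \<open>sum_mset ?M' \<le> N - count M x * x\<close> by fastforce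
        moreover have "card (set_mset ?M') = r"
        proof -
          have "set_mset ?M' = set_mset M - {x}" by auto
          then show ?thesis using cM x by (simp add: card_Diff_singleton)
        qed
        moreover have "count ?M' y \<le> B" for y using cB[of y] by simp
        ultimately show ?thesis unfolding DD_def Fin_def by auto
      qed
      ultimately show "?G p \<in> ?T" using c1 cB[of x] p by auto
    qed
    show "(\<lambda>(M,x). ?f M) p \<le> ?F (?G p)" if pS: "p \<in> Sigma ?D set_mset" for p
    proof -
      obtain M x where p: "p = (M,x)" and M: "M \<in> ?D" and x: "x \<in># M" using pS by auto
      let ?M' = "filter_mset (\<lambda>y. y \<noteq> x) M"
      have s: "sum_mset M = sum_mset ?M' + count M x * x" by (rule sum_split_elem)
      have "set_mset ?M' = set_mset M - {x}" by auto
      then have pr: "(\<Prod>y\<in>set_mset M. ww a y) = ww a x * (\<Prod>y\<in>set_mset ?M'. ww a y)"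
        using x by (simp add: prod.remove)
      have "N - sum_mset M = N - count M x * x - sum_mset ?M'" using s by simp
      then show ?thesis using p pr by (simp add: mult.assoc)
    qed
    show "0 \<le> ?F t" if "t \<in> ?T" for t
      by (cases t) (auto simp: ww_nonneg prod_nonneg)
  qed
  also have "\<dots> = (\<Sum>j\<in>{1..B}. \<Sum>x\<in>{x. j*x \<le> N}. ww a x * SL B a (N - j*x) r g)"
    unfolding SL_def
    by (subst sum.Sigma[symmetric], simp, use finx in \<open>auto intro: finite_SigmaI finite_DD\<close>)
       (rule sum.cong, simp, subst sum.Sigma[symmetric], use finx in \<open>auto simp: finite_DD sum_distrib_left\<close>)
  finally show ?thesis .
qed

lemma SL_nonneg: "0 \<le> SL B a N r g"
  unfolding SL_def by (intro sum_nonneg mult_nonneg_nonneg prod_nonneg) (auto simp: ww_nonneg)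

lemma SL_bound:
  assumes a: "0 < a" "a < 1" and B: "1 \<le> B" and g: "-1 < g"
  shows "\<exists>K\<ge>0. \<forall>N. SL B a N r g \<le> K * (real N + 1) powr (real r * (1-a) + g)"
proof (induction r)
  case 0
  show ?case by (rule exI[of _ 1]) (simp add: SL_0)
next
  case (Suc r)
  then obtain K where K: "K \<ge> 0" "\<And>N. SL B a N r g \<le> K * (real N + 1) powr (real r * (1-a) + g)" by blast
  define E where "E = real r * (1-a) + g"
  have E: "-1 < E" unfolding E_def using a g by (simp add: add_strict_increasing2)
  define Kc where "Kc j = (2 powr \<bar>E\<bar> * (1 + 1/(1-a)) + (2*real j) powr a * (1 + 1/(1+E)))" for j :: nat
  have ex: "1 - a + E = real (Suc r) * (1 - a) + g" unfolding E_def by (simp add: algebra_simps)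
  show ?case
  proof (intro exI[of _ "K * (\<Sum>j\<in>{1..B}. Kc j)"] conjI allI)
    show "0 \<le> K * (\<Sum>j\<in>{1..B}. Kc j)" using K E a by (intro mult_nonneg_nonneg sum_nonneg) (auto simp: Kc_def)
    fix N
    have "SL B a N (Suc r) g \<le> (\<Sum>j\<in>{1..B}. \<Sum>x\<in>{x. j*x \<le> N}. ww a x * SL B a (N - j*x) r g)"
      by (rule SL_red[OF B])
    also have "\<dots> \<le> (\<Sum>j\<in>{1..B}. K * (\<Sum>x\<in>{x. j*x \<le> N}. (real x + 1) powr (-a) * (real (N - j*x) + 1) powr E))"
      unfolding sum_distrib_left
    proof (intro sum_mono)
      fix j x
      have "ww a x * SL B a (N - j*x) r g \<le> ww a x * (K * (real (N - j*x) + 1) powr E)"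
        using K(2)[of "N - j*x"] unfolding E_def by (intro mult_left_mono) (auto simp: ww_nonneg)
      then show "ww a x * SL B a (N - j*x) r g \<le> K * ((real x + 1) powr (-a) * (real (N - j*x) + 1) powr E)"
        by (simp add: ww_def mult_ac)
    qed
    also have "\<dots> \<le> (\<Sum>j\<in>{1..B}. K * (Kc j * (real N + 1) powr (1 - a + E)))"
    proof (intro sum_mono mult_left_mono)
      fix j assume j: "j \<in> {1..B}"
      show "(\<Sum>x\<in>{x. j*x \<le> N}. (real x + 1) powr (-a) * (real (N - j*x) + 1) powr E) \<le> Kc j * (real N + 1) powr (1 - a + E)"
        unfolding Kc_def by (rule conv) (use a E j in auto)
    qed (use K in auto)
    also have "\<dots> = K * (\<Sum>j\<in>{1..B}. Kc j) * (real N + 1) powr (real (Suc r) * (1 - a) + g)"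
      by (simp add: ex sum_distrib_left sum_distrib_right mult.assoc)
    finally show "SL B a N (Suc r) g \<le> K * (\<Sum>j\<in>{1..B}. Kc j) * (real N + 1) powr (real (Suc r) * (1 - a) + g)" .
  qed
qed

definition WS :: "nat \<Rightarrow> nat \<Rightarrow> nat \<Rightarrow> nat multiset set" where
  "WS B X r = {M \<in> DD B X r. sum_mset M = X}"
definition WW :: "nat \<Rightarrow> real \<Rightarrow> nat \<Rightarrow> nat \<Rightarrow> real" where
  "WW B a X r = (\<Sum>M\<in>WS B X r. \<Prod>x\<in>set_mset M. ww a x)"

lemma finite_WS: "finite (WS B X r)" unfolding WS_def using finite_DD by simp

lemma WW_nonneg: "0 \<le> WW B a X r"
  unfolding WW_def by (intro sum_nonneg prod_nonneg) (auto simp: ww_nonneg)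

lemma WW_le_SL: "WW B a X r \<le> SL B a X r g"
proof -
  have "WW B a X r = (\<Sum>M\<in>WS B X r. (\<Prod>x\<in>set_mset M. ww a x) * (real (X - sum_mset M) + 1) powr g)"
    unfolding WW_def by (rule sum.cong) (auto simp: WS_def)
  also have "\<dots> \<le> SL B a X r g" unfolding SL_def
    by (rule sum_mono2) (auto simp: finite_DD WS_def ww_nonneg prod_nonneg)
  finally show ?thesis .
qed

lemma WW_bound:
  assumes a: "0 < a" "a < 1" and B: "1 \<le> B" and d: "0 < d"
  shows "\<exists>K\<ge>0. \<forall>X. WW B a X r \<le> K * (real X + 1) powr (real r * (1-a) - 1 + d)"
proof -
  obtain K where K: "K \<ge> 0" "\<And>N. SL B a N r (-1 + d) \<le> K * (real N + 1) powr (real r * (1-a) + (-1 + d))"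
    using SL_bound[OF a B, of "-1+d" r] d by auto
  have e: "real r * (1-a) + (-1 + d) = real r * (1-a) - 1 + d" by simp
  show ?thesis
  proof (intro exI[of _ K] conjI allI)
    fix X
    show "WW B a X r \<le> K * (real X + 1) powr (real r * (1-a) - 1 + d)"
      using WW_le_SL[of B a X r "-1+d"] K(2)[of X] unfolding e by linarith
  qed (use K in auto)
qed

lemma count_sets:
  assumes "finite T"
  shows "finite {M. set_mset M = T \<and> (\<forall>x. count M x \<le> B)}"
    and "card {M. set_mset M = T \<and> (\<forall>x. count M x \<le> B)} \<le> B ^ card T"
proof -
  let ?S = "{M. set_mset M = T \<and> (\<forall>x. count M x \<le> B)}"
  let ?g = "\<lambda>M. restrict (count M) T"
  have inj: "inj_on ?g ?S"
  proof (rule inj_onI)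
    fix M N assume "M \<in> ?S" "N \<in> ?S" "?g M = ?g N"
    then have sM: "set_mset M = T" "set_mset N = T" and eq: "restrict (count M) T = restrict (count N) T" by auto
    show "M = N"
    proof (rule multiset_eqI)
      fix x show "count M x = count N x"
      proof (cases "x \<in> T")
        case True then show ?thesis using fun_cong[OF eq, of x] by simp
      next
        case False then show ?thesis using sM by (metis count_eq_zero_iff)
      qed
    qed
  qed
  have sub: "?g ` ?S \<subseteq> PiE T (\<lambda>_. {1..B})"
    by (auto simp: Suc_le_eq)
  have fin: "finite (PiE T (\<lambda>_. {1..B}))" using assms by (intro finite_PiE) auto
  show "finite ?S" using finite_imageD[OF finite_subset[OF sub fin] inj] .
  have "card ?S \<le> card (PiE T (\<lambda>_. {1..B}))" using inj sub fin by (rule card_inj_on_le)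
  also have "\<dots> = B ^ card T" using assms by (simp add: card_PiE)
  finally show "card ?S \<le> B ^ card T" .
qed

lemma pair_sum_le2:
  fixes f :: "nat multiset \<Rightarrow> real"
  assumes X: "finite X" and Y: "finite Y" and cY: "\<And>q. q \<in> Y \<Longrightarrow> card (set_mset q) = r"
    and cX: "\<And>p x. p \<in> X \<Longrightarrow> count p x \<le> B" and f: "\<And>q. 0 \<le> f q"
  shows "(\<Sum>(p,q)\<in>{(p,q). p \<in> X \<and> q \<in> Y \<and> set_mset p = set_mset q}. f q) \<le> real (B^r) * (\<Sum>q\<in>Y. f q)"
proof -
  have "(\<Sum>(p,q)\<in>{(p,q). p \<in> X \<and> q \<in> Y \<and> set_mset p = set_mset q}. f q)
      \<le> (\<Sum>(q,p)\<in>Sigma Y (\<lambda>q. {p\<in>X. set_mset p = set_mset q}). f q)"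
    by (rule sum_le_inj[where g = "\<lambda>(p,q). (q,p)"]) (use X Y f in \<open>auto simp: inj_on_def\<close>)
  also have "\<dots> = (\<Sum>q\<in>Y. \<Sum>p\<in>{p\<in>X. set_mset p = set_mset q}. f q)"
    by (rule sum.Sigma[symmetric]) (use X Y in auto)
  also have "\<dots> = (\<Sum>q\<in>Y. real (card {p\<in>X. set_mset p = set_mset q}) * f q)" by simp
  also have "\<dots> \<le> (\<Sum>q\<in>Y. real (B^r) * f q)"
  proof (rule sum_mono, rule mult_right_mono)
    fix q assume q: "q \<in> Y"
    have "{p\<in>X. set_mset p = set_mset q} \<subseteq> {M. set_mset M = set_mset q \<and> (\<forall>x. count M x \<le> B)}"
      using cX by auto
    then have "card {p\<in>X. set_mset p = set_mset q} \<le> card {M. set_mset M = set_mset q \<and> (\<forall>x. count M x \<le> B)}"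
      by (rule card_mono[OF count_sets(1)[OF finite_set_mset]])
    also have "\<dots> \<le> B ^ r" using count_sets(2)[OF finite_set_mset, of q B] cY[OF q] by simp
    finally show "real (card {p\<in>X. set_mset p = set_mset q}) \<le> real (B^r)" by simp
  qed (use f in auto)
  also have "\<dots> = real (B^r) * (\<Sum>q\<in>Y. f q)" by (simp add: sum_distrib_left)
  finally show ?thesis .
qed

lemma pair_sum_le1:
  fixes f :: "nat multiset \<Rightarrow> real"
  assumes X: "finite X" and Y: "finite Y" and cX: "\<And>p. p \<in> X \<Longrightarrow> card (set_mset p) = r"
    and cY: "\<And>q x. q \<in> Y \<Longrightarrow> count q x \<le> B" and f: "\<And>q. 0 \<le> f q"
  shows "(\<Sum>(p,q)\<in>{(p,q). p \<in> X \<and> q \<in> Y \<and> set_mset p = set_mset q}. f p) \<le> real (B^r) * (\<Sum>p\<in>X. f p)"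
proof -
  have "(\<Sum>(p,q)\<in>{(p,q). p \<in> X \<and> q \<in> Y \<and> set_mset p = set_mset q}. f p)
     \<le> (\<Sum>(q,p)\<in>{(q,p). q \<in> Y \<and> p \<in> X \<and> set_mset q = set_mset p}. f p)"
    by (rule sum_le_inj[where g = "\<lambda>(p,q). (q,p)"])
       (use X Y f in \<open>auto simp: inj_on_def intro: finite_subset[of _ "Y \<times> X"]\<close>)
  also have "\<dots> \<le> real (B^r) * (\<Sum>p\<in>X. f p)"
    by (rule pair_sum_le2) (use assms in auto)
  finally show ?thesis .
qed

definition Mu :: "nat \<Rightarrow> nat \<Rightarrow> nat \<Rightarrow> nat multiset set" where
  "Mu h B N = {M. set_mset M \<subseteq> {..N} \<and> sum_mset M = N \<and> size M = B \<and> card (set_mset M) \<le> h}"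
definition PD :: "nat \<Rightarrow> nat \<Rightarrow> nat \<Rightarrow> nat \<Rightarrow> (nat multiset \<times> nat multiset) set" where
  "PD h B N1 N2 = {(M,M'). M \<in> Mu h B N1 \<and> M' \<in> Mu h B N2 \<and> set_mset M \<inter> set_mset M' \<noteq> {}
      \<and> (N1 = N2 \<longrightarrow> set_mset M \<noteq> set_mset M')}"
definition Fib :: "nat \<Rightarrow> nat \<Rightarrow> nat \<Rightarrow> nat \<Rightarrow> nat \<Rightarrow> nat \<Rightarrow> nat \<Rightarrow> (nat multiset \<times> nat multiset) set" where
  "Fib h B N1 N2 rc ra rb = {(M,M') \<in> PD h B N1 N2. card (set_mset M \<inter> set_mset M') = rc
      \<and> card (set_mset M - set_mset M') = ra \<and> card (set_mset M' - set_mset M) = rb}"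
definition DomC :: "nat \<Rightarrow> nat \<Rightarrow> nat \<Rightarrow> nat \<Rightarrow> (nat multiset \<times> nat multiset) set" where
  "DomC B N1 N2 r = {(p,q). p \<in> DD B N1 r \<and> q \<in> DD B N2 r \<and> set_mset p = set_mset q}"

definition fC :: "nat multiset \<Rightarrow> nat multiset \<Rightarrow> nat multiset" where
  "fC M M' = filter_mset (\<lambda>x. x \<in># M') M"
definition fA :: "nat multiset \<Rightarrow> nat multiset \<Rightarrow> nat multiset" where
  "fA M M' = filter_mset (\<lambda>x. x \<notin># M') M"

lemma fC_fA: "M = fC M M' + fA M M'"
  unfolding fC_def fA_def by (rule multiset_partition)
lemma set_fC[simp]: "set_mset (fC M M') = set_mset M \<inter> set_mset M'" unfolding fC_def by auto
lemma set_fA[simp]: "set_mset (fA M M') = set_mset M - set_mset M'" unfolding fA_def by auto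
lemma count_fC: "count (fC M M') x \<le> count M x" unfolding fC_def by simp
lemma count_fA: "count (fA M M') x \<le> count M x" unfolding fA_def by simp
lemma sum_fC_fA: "sum_mset M = sum_mset (fC M M') + sum_mset (fA M M')"
  by (subst fC_fA[of M M']) (simp add: sum_mset.union)

lemma Mu_Fin: "Mu h B N \<subseteq> Fin B N"
  unfolding Mu_def Fin_def using count_le_size by fastforce
lemma finite_Mu: "finite (Mu h B N)" using finite_subset[OF Mu_Fin finite_Fin] .
lemma finite_PD: "finite (PD h B N1 N2)"
  by (rule finite_subset[of _ "Mu h B N1 \<times> Mu h B N2"]) (auto simp: PD_def finite_Mu)
lemma finite_Fib: "finite (Fib h B N1 N2 rc ra rb)"
  by (rule finite_subset[OF _ finite_PD]) (auto simp: Fib_def)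
lemma finite_DomC: "finite (DomC B N1 N2 r)"
  by (rule finite_subset[of _ "DD B N1 r \<times> DD B N2 r"]) (auto simp: DomC_def finite_DD)

lemma prod_union3:
  fixes f :: "nat \<Rightarrow> real"
  assumes "finite S" "finite S'"
  shows "(\<Prod>x\<in>S \<union> S'. f x) = (\<Prod>x\<in>S \<inter> S'. f x) * ((\<Prod>x\<in>S - S'. f x) * (\<Prod>x\<in>S' - S. f x))"
proof -
  have e: "S \<union> S' = (S \<inter> S') \<union> ((S - S') \<union> (S' - S))" by blast
  have "(\<Prod>x\<in>(S \<inter> S') \<union> ((S - S') \<union> (S' - S)). f x) = (\<Prod>x\<in>S \<inter> S'. f x) * (\<Prod>x\<in>(S - S') \<union> (S' - S). f x)"
    by (rule prod.union_disjoint) (use assms in auto)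
  also have "(\<Prod>x\<in>(S - S') \<union> (S' - S). f x) = (\<Prod>x\<in>S - S'. f x) * (\<Prod>x\<in>S' - S. f x)"
    by (rule prod.union_disjoint) (use assms in auto)
  finally show ?thesis unfolding e[symmetric] .
qed

lemma GR:
  shows "(\<Sum>(M,M')\<in>Fib h B N1 N2 rc ra rb. \<Prod>x\<in>set_mset M \<union> set_mset M'. ww a x)
    \<le> (\<Sum>(p,q)\<in>DomC B N1 N2 rc. (\<Prod>x\<in>set_mset p. ww a x) * (WW B a (N1 - sum_mset p) ra * WW B a (N2 - sum_mset q) rb))"
proof -
  let ?T = "Sigma (DomC B N1 N2 rc) (\<lambda>(p,q). WS B (N1 - sum_mset p) ra \<times> WS B (N2 - sum_mset q) rb)"
  let ?F = "\<lambda>((p,q),(u,v)). (\<Prod>x\<in>set_mset p. ww a x) * ((\<Prod>x\<in>set_mset u. ww a x) * (\<Prod>x\<in>set_mset v. ww a x))"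
  let ?G = "\<lambda>(M,M'). ((fC M M', fC M' M), (fA M M', fA M' M))"
  have "(\<Sum>(M,M')\<in>Fib h B N1 N2 rc ra rb. \<Prod>x\<in>set_mset M \<union> set_mset M'. ww a x) \<le> sum ?F ?T"
  proof (rule sum_le_inj[where g = ?G])
    show "finite ?T" by (auto intro!: finite_SigmaI simp: finite_DomC finite_WS)
    show "inj_on ?G (Fib h B N1 N2 rc ra rb)"
    proof (rule inj_onI)
      fix p q assume "p \<in> Fib h B N1 N2 rc ra rb" "q \<in> Fib h B N1 N2 rc ra rb" "?G p = ?G q"
      then show "p = q" by (cases p, cases q) (simp, metis fC_fA)
    qed
    show "?G ` Fib h B N1 N2 rc ra rb \<subseteq> ?T"
    proof (rule image_subsetI)
      fix p assume "p \<in> Fib h B N1 N2 rc ra rb"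
      then obtain M M' where p: "p = (M,M')" and M: "M \<in> Mu h B N1" and M': "M' \<in> Mu h B N2"
        and c: "card (set_mset M \<inter> set_mset M') = rc" "card (set_mset M - set_mset M') = ra"
               "card (set_mset M' - set_mset M) = rb"
        unfolding Fib_def PD_def by auto
      have MB: "count M x \<le> B" "count M' x \<le> B" for x
        using M M' count_le_size[of M x] count_le_size[of M' x] unfolding Mu_def by auto
      have sM: "sum_mset M = N1" "sum_mset M' = N2" "set_mset M \<subseteq> {..N1}" "set_mset M' \<subseteq> {..N2}"
        using M M' unfolding Mu_def by auto
      have s1: "sum_mset M = sum_mset (fC M M') + sum_mset (fA M M')" by (rule sum_fC_fA)
      have s2: "sum_mset M' = sum_mset (fC M' M) + sum_mset (fA M' M)" by (rule sum_fC_fA)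
      have "fC M M' \<in> DD B N1 rc"
        unfolding DD_def Fin_def mem_Collect_eq
      proof (intro conjI allI)
        show "set_mset (fC M M') \<subseteq> {..N1}" using sM by auto
        show "count (fC M M') x \<le> B" for x using count_fC[of M M' x] MB(1)[of x] by linarith
        show "card (set_mset (fC M M')) = rc" using c by simp
        show "sum_mset (fC M M') \<le> N1" using s1 sM by linarith
      qed
      moreover have "fC M' M \<in> DD B N2 rc"
        unfolding DD_def Fin_def mem_Collect_eq
      proof (intro conjI allI)
        show "set_mset (fC M' M) \<subseteq> {..N2}" using sM by auto
        show "count (fC M' M) x \<le> B" for x using count_fC[of M' M x] MB(2)[of x] by linarith
        show "card (set_mset (fC M' M)) = rc" using c by (simp add: Int_commute)
        show "sum_mset (fC M' M) \<le> N2" using s2 sM by linarith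
      qed
      moreover have "set_mset (fC M M') = set_mset (fC M' M)" by auto
      moreover have "fA M M' \<in> WS B (N1 - sum_mset (fC M M')) ra"
        unfolding WS_def DD_def Fin_def mem_Collect_eq
      proof (intro conjI allI)
        have e: "sum_mset (fA M M') = N1 - sum_mset (fC M M')" using s1 sM by simp
        then show "sum_mset (fA M M') = N1 - sum_mset (fC M M')" "sum_mset (fA M M') \<le> N1 - sum_mset (fC M M')" by auto
        show "set_mset (fA M M') \<subseteq> {..N1 - sum_mset (fC M M')}"
          using mem_le_sum_mset[of _ "fA M M'"] e by (simp add: subset_iff)
        show "count (fA M M') x \<le> B" for x using count_fA[of M M' x] MB(1)[of x] by linarith
        show "card (set_mset (fA M M')) = ra" using c by simp
      qed
      moreover have "fA M' M \<in> WS B (N2 - sum_mset (fC M' M)) rb"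
        unfolding WS_def DD_def Fin_def mem_Collect_eq
      proof (intro conjI allI)
        have e: "sum_mset (fA M' M) = N2 - sum_mset (fC M' M)" using s2 sM by simp
        then show "sum_mset (fA M' M) = N2 - sum_mset (fC M' M)" "sum_mset (fA M' M) \<le> N2 - sum_mset (fC M' M)" by auto
        show "set_mset (fA M' M) \<subseteq> {..N2 - sum_mset (fC M' M)}"
          using mem_le_sum_mset[of _ "fA M' M"] e by (simp add: subset_iff)
        show "count (fA M' M) x \<le> B" for x using count_fA[of M' M x] MB(2)[of x] by linarith
        show "card (set_mset (fA M' M)) = rb" using c by simp
      qed
      ultimately show "?G p \<in> ?T" unfolding p DomC_def by auto
    qed
    show "(\<lambda>(M,M'). \<Prod>x\<in>set_mset M \<union> set_mset M'. ww a x) p \<le> ?F (?G p)" for p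
      by (cases p) (simp add: prod_union3 Int_commute)
    show "0 \<le> ?F t" for t
      by (cases t) (auto intro!: mult_nonneg_nonneg prod_nonneg simp: ww_nonneg)
  qed
  also have "sum ?F ?T = (\<Sum>(p,q)\<in>DomC B N1 N2 rc. (\<Prod>x\<in>set_mset p. ww a x) * (WW B a (N1 - sum_mset p) ra * WW B a (N2 - sum_mset q) rb))"
  proof -
    let ?Y = "\<lambda>(p,q). WS B (N1 - sum_mset p) ra \<times> WS B (N2 - sum_mset q) rb"
    have "sum ?F ?T = (\<Sum>(x,y)\<in>?T. ?F (x,y))" by (simp only: case_prod_eta)
    also have "\<dots> = (\<Sum>x\<in>DomC B N1 N2 rc. \<Sum>y\<in>?Y x. ?F (x,y))"
      by (rule sum.Sigma[symmetric]) (auto simp: finite_DomC finite_WS)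
    also have "\<dots> = (\<Sum>(p,q)\<in>DomC B N1 N2 rc. (\<Prod>x\<in>set_mset p. ww a x) * (WW B a (N1 - sum_mset p) ra * WW B a (N2 - sum_mset q) rb))"
    proof (rule sum.cong[OF refl])
      fix x assume "x \<in> DomC B N1 N2 rc"
      obtain p q where x: "x = (p,q)" by (cases x)
      let ?A = "WS B (N1 - sum_mset p) ra" and ?B = "WS B (N2 - sum_mset q) rb"
      have "(\<Sum>(u,v)\<in>?A \<times> ?B. ?F ((p,q),(u,v))) = (\<Sum>u\<in>?A. \<Sum>v\<in>?B. (\<Prod>x\<in>set_mset p. ww a x) * ((\<Prod>x\<in>set_mset u. ww a x) * (\<Prod>x\<in>set_mset v. ww a x)))"
        by (simp add: sum.cartesian_product)
      also have "\<dots> = (\<Prod>x\<in>set_mset p. ww a x) * (WW B a (N1 - sum_mset p) ra * WW B a (N2 - sum_mset q) rb)"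
        unfolding WW_def by (subst sum_product) (simp add: sum_distrib_left)
      finally show "(\<Sum>y\<in>?Y x. ?F (x,y)) = (\<lambda>(p,q). (\<Prod>x\<in>set_mset p. ww a x) * (WW B a (N1 - sum_mset p) ra * WW B a (N2 - sum_mset q) rb)) x"
        unfolding x by simp
    qed
    finally show ?thesis .
  qed
  finally show ?thesis .
qed

lemma young_like:
  fixes u v al be gm :: real
  assumes "1 \<le> u" "1 \<le> v" "al \<le> 0" "be \<le> 0" "al + be \<le> gm"
  shows "u powr al * v powr be \<le> u powr gm + v powr gm"
proof (cases "u \<le> v")
  case True
  have "v powr be \<le> u powr be" using assms True by (intro powr_mono2') auto
  then have "u powr al * v powr be \<le> u powr al * u powr be" by (intro mult_left_mono) auto
  also have "\<dots> = u powr (al + be)" by (simp add: powr_add)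
  also have "\<dots> \<le> u powr gm" using assms by (intro powr_mono) auto
  finally show ?thesis by (smt (verit) powr_ge_zero)
next
  case False
  have "u powr al \<le> v powr al" using assms False by (intro powr_mono2') auto
  then have "u powr al * v powr be \<le> v powr al * v powr be" by (intro mult_right_mono) auto
  also have "\<dots> = v powr (al + be)" by (simp add: powr_add)
  also have "\<dots> \<le> v powr gm" using assms by (intro powr_mono) auto
  finally show ?thesis by (smt (verit) powr_ge_zero)
qed

lemma GB:
  assumes a: "0 < a" "a < 1" and B: "1 \<le> B" and d: "0 < d"
    and al: "real ra * (1-a) - 1 + d \<le> 0" and be: "real rb * (1-a) - 1 + d \<le> 0"
    and gm1: "(real ra * (1-a) - 1 + d) + (real rb * (1-a) - 1 + d) \<le> gm" and gm2: "-1 + d \<le> gm"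
    and E: "real rc * (1-a) + gm \<le> 0"
  shows "\<exists>K\<ge>0. \<forall>N1 N2. N1 \<le> N2 \<longrightarrow>
    (\<Sum>(p,q)\<in>DomC B N1 N2 rc. (\<Prod>x\<in>set_mset p. ww a x) * (WW B a (N1 - sum_mset p) ra * WW B a (N2 - sum_mset q) rb))
      \<le> K * (real N1 + 1) powr (real rc * (1-a) + gm)"
proof -
  define al where "al = real ra * (1-a) - 1 + d"
  define be where "be = real rb * (1-a) - 1 + d"
  define E where "E = real rc * (1-a) + gm"
  obtain Ka where Ka: "Ka \<ge> 0" "\<And>X. WW B a X ra \<le> Ka * (real X + 1) powr al"
    using WW_bound[OF a B d, of ra] unfolding al_def by auto
  obtain Kb where Kb: "Kb \<ge> 0" "\<And>X. WW B a X rb \<le> Kb * (real X + 1) powr be"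
    using WW_bound[OF a B d, of rb] unfolding be_def by auto
  have gmg: "-1 < gm" using gm2 d by linarith
  obtain Ks where Ks: "Ks \<ge> 0" "\<And>N. SL B a N rc gm \<le> Ks * (real N + 1) powr E"
    using SL_bound[OF a B gmg, of rc] unfolding E_def by auto
  let ?K = "2 * (Ka * Kb * real (B^rc) * Ks)"
  show ?thesis
  proof (intro exI[of _ ?K] conjI allI impI)
    show "0 \<le> ?K" using Ka Kb Ks by simp
    fix N1 N2 :: nat assume N12: "N1 \<le> N2"
    let ?P = "\<lambda>p. \<Prod>x\<in>set_mset p. ww a x"
    let ?f1 = "\<lambda>p. ?P p * (real (N1 - sum_mset p) + 1) powr gm"
    let ?f2 = "\<lambda>q. ?P q * (real (N2 - sum_mset q) + 1) powr gm"
    have Pnn: "0 \<le> ?P p" for p by (simp add: prod_nonneg ww_nonneg)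
    have "(\<Sum>(p,q)\<in>DomC B N1 N2 rc. ?P p * (WW B a (N1 - sum_mset p) ra * WW B a (N2 - sum_mset q) rb))
        \<le> (\<Sum>(p,q)\<in>DomC B N1 N2 rc. Ka * Kb * (?f1 p + ?f2 q))"
    proof (rule sum_mono, clarify)
      fix p q assume pq: "(p,q) \<in> DomC B N1 N2 rc"
      then have Pq: "?P p = ?P q" unfolding DomC_def by simp
      let ?X = "real (N1 - sum_mset p) + 1" and ?Y = "real (N2 - sum_mset q) + 1"
      have "WW B a (N1 - sum_mset p) ra * WW B a (N2 - sum_mset q) rb \<le> (Ka * ?X powr al) * (Kb * ?Y powr be)"
        using Ka Kb by (intro mult_mono) (auto simp: WW_nonneg)
      also have "\<dots> = Ka * Kb * (?X powr al * ?Y powr be)" by (simp add: mult_ac)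
      also have "\<dots> \<le> Ka * Kb * (?X powr gm + ?Y powr gm)"
        using Ka Kb al be gm1 unfolding al_def be_def by (intro mult_left_mono young_like) auto
      finally have "?P p * (WW B a (N1 - sum_mset p) ra * WW B a (N2 - sum_mset q) rb) \<le> ?P p * (Ka * Kb * (?X powr gm + ?Y powr gm))"
        using Pnn by (intro mult_left_mono) auto
      also have "\<dots> = Ka * Kb * (?f1 p + ?f2 q)" using Pq by (simp add: algebra_simps)
      finally show "?P p * (WW B a (N1 - sum_mset p) ra * WW B a (N2 - sum_mset q) rb) \<le> Ka * Kb * (?f1 p + ?f2 q)" .
    qed
    also have "\<dots> = Ka * Kb * ((\<Sum>(p,q)\<in>DomC B N1 N2 rc. ?f1 p) + (\<Sum>(p,q)\<in>DomC B N1 N2 rc. ?f2 q))"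
      by (subst sum.distrib[symmetric], subst sum_distrib_left) (simp add: case_prod_beta)
    also have "\<dots> \<le> Ka * Kb * (real (B^rc) * SL B a N1 rc gm + real (B^rc) * SL B a N2 rc gm)"
    proof (intro mult_left_mono add_mono)
      have D: "DomC B N1 N2 rc = {(p,q). p \<in> DD B N1 rc \<and> q \<in> DD B N2 rc \<and> set_mset p = set_mset q}"
        unfolding DomC_def ..
      show "(\<Sum>(p,q)\<in>DomC B N1 N2 rc. ?f1 p) \<le> real (B^rc) * SL B a N1 rc gm"
        unfolding D SL_def
        by (rule pair_sum_le1[OF finite_DD finite_DD]) (auto simp: DD_def Fin_def Pnn)
      show "(\<Sum>(p,q)\<in>DomC B N1 N2 rc. ?f2 q) \<le> real (B^rc) * SL B a N2 rc gm"
        unfolding D SL_def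
        by (rule pair_sum_le2[OF finite_DD finite_DD]) (auto simp: DD_def Fin_def Pnn)
    qed (use Ka Kb in auto)
    also have "\<dots> \<le> Ka * Kb * (real (B^rc) * (Ks * (real N1 + 1) powr E) + real (B^rc) * (Ks * (real N1 + 1) powr E))"
    proof (intro mult_left_mono add_mono)
      show "SL B a N1 rc gm \<le> Ks * (real N1 + 1) powr E" by (rule Ks(2))
      have "(real N2 + 1) powr E \<le> (real N1 + 1) powr E"
        using N12 E unfolding E_def by (intro powr_mono2') auto
      then show "SL B a N2 rc gm \<le> Ks * (real N1 + 1) powr E"
        using Ks(2)[of N2] Ks(1) by (smt (verit) mult_left_mono)
    qed (use Ka Kb in auto)
    also have "\<dots> = ?K * (real N1 + 1) powr (real rc * (1-a) + gm)"
      unfolding E_def by (simp add: algebra_simps)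
    finally show "(\<Sum>(p,q)\<in>DomC B N1 N2 rc. ?P p * (WW B a (N1 - sum_mset p) ra * WW B a (N2 - sum_mset q) rb))
      \<le> ?K * (real N1 + 1) powr (real rc * (1-a) + gm)" .
  qed
qed

lemma exists_s:
  assumes S: "set_mset M = set_mset M'" and sz: "size M = size M'" and ne: "M \<noteq> M'" and t: "t \<in># M"
  shows "\<exists>s. s \<in># M \<and> count M t * count M' s \<noteq> count M s * count M' t"
proof (rule ccontr)
  assume "\<not> ?thesis"
  then have all: "\<And>s. s \<in># M \<Longrightarrow> count M t * count M' s = count M s * count M' t" by blast
  have "count M t * size M' = (\<Sum>s\<in>set_mset M. count M t * count M' s)"
    by (simp add: size_multiset_overloaded_eq S sum_distrib_left)
  also have "\<dots> = (\<Sum>s\<in>set_mset M. count M s * count M' t)" using all by (intro sum.cong) auto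
  also have "\<dots> = size M * count M' t"
    by (simp add: size_multiset_overloaded_eq sum_distrib_right)
  finally have "count M t * size M = size M * count M' t" using sz by simp
  moreover have "size M > 0" using t by (metis gr0I set_mset_eq_empty_iff size_eq_0_iff_empty empty_iff)
  ultimately have eqt: "count M t = count M' t" by (metis mult.commute mult_cancel_left not_gr0)
  have pos: "count M t > 0" using t by simp
  have "count M s = count M' s" for s
  proof (cases "s \<in># M")
    case True
    then have "count M t * count M' s = count M t * count M s" using all[OF True] eqt by (simp add: mult.commute)
    then show ?thesis using pos by simp
  next
    case False
    then have "s \<notin># M'" using S by auto
    then show ?thesis using False by (simp add: not_in_iff)
  qed
  then have "M = M'" by (rule multiset_eqI)
  then show False using ne by simp
qed

lemma det_inj:
  fixes c1 c2 c3 c4 x y x' y' :: nat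
  assumes e1: "c1*x + c2*y = c1*x' + c2*y'" and e2: "c3*x + c4*y = c3*x' + c4*y'"
    and d: "c1*c4 \<noteq> c2*c3"
  shows "x = x' \<and> y = y'"
proof -
  define X where "X = int x - int x'"
  define Y where "Y = int y' - int y"
  have i1: "int c1 * X = int c2 * Y" using arg_cong[OF e1, of int] unfolding X_def Y_def by (simp add: algebra_simps)
  have i2: "int c3 * X = int c4 * Y" using arg_cong[OF e2, of int] unfolding X_def Y_def by (simp add: algebra_simps)
  have "(int c1 * int c4) * X = int c4 * (int c1 * X)" by (simp add: mult_ac)
  also have "\<dots> = int c4 * (int c2 * Y)" using i1 by simp
  also have "\<dots> = int c2 * (int c4 * Y)" by (simp add: mult_ac)
  also have "\<dots> = int c2 * (int c3 * X)" using i2 by simp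
  also have "\<dots> = (int c2 * int c3) * X" by (simp add: mult_ac)
  finally have "(int c1 * int c4 - int c2 * int c3) * X = 0" by (simp add: algebra_simps)
  moreover have "int c1 * int c4 - int c2 * int c3 \<noteq> 0" using d by (metis eq_iff_diff_eq_0 of_nat_eq_iff of_nat_mult)
  ultimately have X0: "X = 0" by simp
  have "(int c1 * int c4) * Y = int c1 * (int c4 * Y)" by (simp add: mult_ac)
  also have "\<dots> = int c1 * (int c3 * X)" using i2 by simp
  also have "\<dots> = 0" using X0 by simp
  finally have "(int c1 * int c4) * Y = 0" .
  moreover have "(int c2 * int c3) * Y = 0"
  proof -
    have "(int c2 * int c3) * Y = int c3 * (int c2 * Y)" by (simp add: mult_ac)
    also have "\<dots> = int c3 * (int c1 * X)" using i1 by simp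
    also have "\<dots> = 0" using X0 by simp
    finally show ?thesis .
  qed
  ultimately have "Y = 0" using d by (metis mult_eq_0_iff of_nat_mult of_nat_eq_0_iff mult_0)
  then show ?thesis using X0 unfolding X_def Y_def by simp
qed

lemma decomp2:
  assumes "t \<noteq> s"
  shows "M = filter_mset (\<lambda>x. x \<noteq> t \<and> x \<noteq> s) M + replicate_mset (count M t) t + replicate_mset (count M s) s"
  using assms by (intro multiset_eqI) auto

lemma sum_le_size_max:
  fixes M :: "nat multiset"
  shows "(\<forall>x\<in>#M. x \<le> t) \<Longrightarrow> sum_mset M \<le> size M * t"
  by (induction M) auto

definition fX :: "nat multiset \<Rightarrow> nat \<Rightarrow> nat \<Rightarrow> nat multiset" where
  "fX M t s = filter_mset (\<lambda>x. x \<noteq> t \<and> x \<noteq> s) M"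

lemma set_fX[simp]: "set_mset (fX M t s) = set_mset M - {t,s}" unfolding fX_def by auto
lemma count_fX: "count (fX M t s) x \<le> count M x" unfolding fX_def by simp
lemma sum_fX: "t \<noteq> s \<Longrightarrow> sum_mset M = sum_mset (fX M t s) + count M t * t + count M s * s"
  unfolding fX_def by (subst decomp2[of t s M]) (auto simp: sum_mset.union)

lemma ww_Max_bound:
  assumes a: "0 \<le> a" and B: "1 \<le> B" and sz: "size M = B" and sM: "sum_mset M = N"
    and t: "\<forall>x\<in>#M. x \<le> t"
  shows "ww a t \<le> real B powr a * (real N + 1) powr (-a)"
proof -
  have "N \<le> B * t" using sum_le_size_max[OF t] sz sM by simp
  then have "real N \<le> real B * real t" by (metis of_nat_le_iff of_nat_mult)
  moreover have "1 \<le> real B" using B by simp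
  ultimately have "real N + 1 \<le> real B * (real t + 1)" by (simp add: distrib_left)
  then have le: "(real N + 1) / real B \<le> real t + 1" using B by (simp add: divide_le_eq mult.commute)
  have "ww a t = (real t + 1) powr (-a)" by (simp add: ww_def)
  also have "\<dots> \<le> ((real N + 1) / real B) powr (-a)" using le a B by (intro powr_mono2') auto
  also have "\<dots> = (real N + 1) powr (-a) / real B powr (-a)" using B by (simp add: powr_divide)
  also have "\<dots> = real B powr a * (real N + 1) powr (-a)" by (simp add: powr_minus field_simps)
  finally show ?thesis .
qed

lemma Fib_facts:
  assumes p: "(M,M') \<in> Fib h B N1 N2 h 0 0" and h: "2 \<le> h"
  shows "set_mset M = set_mset M'" "card (set_mset M) = h" "M \<noteq> M'" "size M = B" "size M' = B"
    "sum_mset M = N1" "sum_mset M' = N2" "set_mset M \<subseteq> {..N1}" "set_mset M' \<subseteq> {..N2}"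
proof -
  from p have M: "M \<in> Mu h B N1" and M': "M' \<in> Mu h B N2" and ne: "N1 = N2 \<longrightarrow> set_mset M \<noteq> set_mset M'"
    and c: "card (set_mset M \<inter> set_mset M') = h" "card (set_mset M - set_mset M') = 0" "card (set_mset M' - set_mset M) = 0"
    unfolding Fib_def PD_def by auto
  have "set_mset M - set_mset M' = {}" "set_mset M' - set_mset M = {}" using c by auto
  then show S: "set_mset M = set_mset M'" by blast
  show "card (set_mset M) = h" using c S by simp
  show "size M = B" "size M' = B" "sum_mset M = N1" "sum_mset M' = N2" "set_mset M \<subseteq> {..N1}" "set_mset M' \<subseteq> {..N2}"
    using M M' unfolding Mu_def by auto
  show "M \<noteq> M'" using ne S M M' unfolding Mu_def by auto
qed

lemma SP:
  assumes a: "0 < a" "a < 1" and B: "1 \<le> B" and h: "2 \<le> h"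
  shows "\<exists>K\<ge>0. \<forall>N1 N2. N1 \<le> N2 \<longrightarrow>
    (\<Sum>(M,M')\<in>Fib h B N1 N2 h 0 0. \<Prod>x\<in>set_mset M \<union> set_mset M'. ww a x)
      \<le> K * (real N1 + 1) powr (real (h-1) * (1-a) - 1)"
proof -
  obtain Ks where Ks: "Ks \<ge> 0" "\<And>N. SL B a N (h-2) 0 \<le> Ks * (real N + 1) powr (real (h-2) * (1-a) + 0)"
    using SL_bound[OF a B, of 0 "h-2"] by auto
  let ?K = "real (B^4) * real B powr a * real (B^(h-2)) * Ks"
  show ?thesis
  proof (intro exI[of _ ?K] conjI allI impI)
    show "0 \<le> ?K" using Ks by simp
    fix N1 N2 :: nat assume N12: "N1 \<le> N2"
    let ?Fb = "Fib h B N1 N2 h 0 0"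
    define tt where "tt p = Max (set_mset (fst p))" for p :: "nat multiset \<times> nat multiset"
    define ss where "ss p = (SOME s. s \<in># fst p \<and> count (fst p) (tt p) * count (snd p) s \<noteq> count (fst p) s * count (snd p) (tt p))" for p
    define G where "G p = ((fX (fst p) (tt p) (ss p), fX (snd p) (tt p) (ss p)),
        (count (fst p) (tt p), count (fst p) (ss p), count (snd p) (tt p), count (snd p) (ss p)))" for p
    let ?C4 = "{1..B} \<times> {1..B} \<times> {1..B} \<times> {1..B}"
    let ?Tg = "DomC B N1 N2 (h-2) \<times> ?C4"
    define c0 where "c0 = real B powr a * (real N1 + 1) powr (-a)"
    let ?P = "\<lambda>p. \<Prod>x\<in>set_mset p. ww a x"
    let ?F = "\<lambda>(pq :: nat multiset \<times> nat multiset, c :: nat \<times> nat \<times> nat \<times> nat). c0 * ?P (fst pq)"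
    have Pnn: "0 \<le> ?P p" for p by (simp add: prod_nonneg ww_nonneg)
    have c0nn: "0 \<le> c0" unfolding c0_def by simp
    have key: "tt (M,M') \<in># M \<and> ss (M,M') \<in># M \<and> tt (M,M') \<noteq> ss (M,M') \<and> (\<forall>x\<in>#M. x \<le> tt (M,M'))
       \<and> count M (tt (M,M')) * count M' (ss (M,M')) \<noteq> count M (ss (M,M')) * count M' (tt (M,M'))"
      if pF: "(M,M') \<in> ?Fb" for M M'
    proof -
      note F = Fib_facts[OF pF h]
      have ne: "set_mset M \<noteq> {}" using F(2) h by auto
      have t: "tt (M,M') \<in># M" unfolding tt_def using ne by simp
      have tmax: "\<forall>x\<in>#M. x \<le> tt (M,M')" unfolding tt_def by simp
      have ex: "\<exists>s. s \<in># M \<and> count M (tt (M,M')) * count M' s \<noteq> count M s * count M' (tt (M,M'))"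
        by (rule exists_s) (use F t in auto)
      have s: "ss (M,M') \<in># M \<and> count M (tt (M,M')) * count M' (ss (M,M')) \<noteq> count M (ss (M,M')) * count M' (tt (M,M'))"
        unfolding ss_def fst_conv snd_conv by (rule someI_ex[OF ex])
      have "tt (M,M') \<noteq> ss (M,M')" using s by (metis mult.commute)
      then show ?thesis using t tmax s by blast
    qed
    have "(\<Sum>(M,M')\<in>?Fb. \<Prod>x\<in>set_mset M \<union> set_mset M'. ww a x) \<le> sum ?F ?Tg"
    proof (rule sum_le_inj[where g = G])
      show "finite ?Tg" by (simp add: finite_DomC)
      show "inj_on G ?Fb"
      proof (rule inj_onI)
        fix p1 p2 assume p1: "p1 \<in> ?Fb" and p2: "p2 \<in> ?Fb" and eq: "G p1 = G p2"
        obtain M1 M1' where p1e: "p1 = (M1,M1')" by (cases p1)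
        obtain M2 M2' where p2e: "p2 = (M2,M2')" by (cases p2)
        note k1 = key[OF p1[unfolded p1e]] and k2 = key[OF p2[unfolded p2e]]
        note F1 = Fib_facts[OF p1[unfolded p1e] h] and F2 = Fib_facts[OF p2[unfolded p2e] h]
        let ?t1 = "tt (M1,M1')" and ?s1 = "ss (M1,M1')" and ?t2 = "tt (M2,M2')" and ?s2 = "ss (M2,M2')"
        from eq have e: "fX M1 ?t1 ?s1 = fX M2 ?t2 ?s2" "fX M1' ?t1 ?s1 = fX M2' ?t2 ?s2"
          "count M1 ?t1 = count M2 ?t2" "count M1 ?s1 = count M2 ?s2" "count M1' ?t1 = count M2' ?t2" "count M1' ?s1 = count M2' ?s2"
          unfolding G_def p1e p2e by auto
        have sum1: "sum_mset M1 = sum_mset (fX M1 ?t1 ?s1) + count M1 ?t1 * ?t1 + count M1 ?s1 * ?s1"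
          using k1 by (intro sum_fX) auto
        have sum2: "sum_mset M2 = sum_mset (fX M2 ?t2 ?s2) + count M2 ?t2 * ?t2 + count M2 ?s2 * ?s2"
          using k2 by (intro sum_fX) auto
        have sum1': "sum_mset M1' = sum_mset (fX M1' ?t1 ?s1) + count M1' ?t1 * ?t1 + count M1' ?s1 * ?s1"
          using k1 by (intro sum_fX) auto
        have sum2': "sum_mset M2' = sum_mset (fX M2' ?t2 ?s2) + count M2' ?t2 * ?t2 + count M2' ?s2 * ?s2"
          using k2 by (intro sum_fX) auto
        have E1: "count M1 ?t1 * ?t1 + count M1 ?s1 * ?s1 = count M1 ?t1 * ?t2 + count M1 ?s1 * ?s2"
          using sum1 sum2 F1(6) F2(6) e by simp
        have E2: "count M1' ?t1 * ?t1 + count M1' ?s1 * ?s1 = count M1' ?t1 * ?t2 + count M1' ?s1 * ?s2"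
          using sum1' sum2' F1(7) F2(7) e by simp
        have dd: "count M1 ?t1 * count M1' ?s1 \<noteq> count M1 ?s1 * count M1' ?t1" using k1 by blast
        have ts: "?t1 = ?t2 \<and> ?s1 = ?s2"
          by (rule det_inj[OF E1 E2 dd])
        have "M1 = M2"
          using decomp2[of ?t1 ?s1 M1] decomp2[of ?t2 ?s2 M2] k1 ts e unfolding fX_def by metis
        moreover have "M1' = M2'"
          using decomp2[of ?t1 ?s1 M1'] decomp2[of ?t2 ?s2 M2'] k1 ts e unfolding fX_def by metis
        ultimately show "p1 = p2" using p1e p2e by simp
      qed
      show "G ` ?Fb \<subseteq> ?Tg"
      proof (rule image_subsetI)
        fix p assume pF: "p \<in> ?Fb"
        obtain M M' where pe: "p = (M,M')" by (cases p)
        note k = key[OF pF[unfolded pe]] and F = Fib_facts[OF pF[unfolded pe] h]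
        let ?t = "tt (M,M')" and ?s = "ss (M,M')"
        have cB: "count M x \<le> B" "count M' x \<le> B" for x using count_le_size[of M x] count_le_size[of M' x] F by auto
        have cardX: "card (set_mset M - {?t,?s}) = h - 2" using k F(2) by (simp add: card_Diff_subset)
        have "fX M ?t ?s \<in> DD B N1 (h-2)"
          unfolding DD_def Fin_def mem_Collect_eq
        proof (intro conjI allI)
          show "set_mset (fX M ?t ?s) \<subseteq> {..N1}" using F by auto
          show "count (fX M ?t ?s) x \<le> B" for x using count_fX[of M ?t ?s x] cB(1)[of x] by linarith
          show "card (set_mset (fX M ?t ?s)) = h - 2" using cardX by simp
          show "sum_mset (fX M ?t ?s) \<le> N1" using sum_fX[of ?t ?s M] k F by linarith
        qed
        moreover have "fX M' ?t ?s \<in> DD B N2 (h-2)"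
          unfolding DD_def Fin_def mem_Collect_eq
        proof (intro conjI allI)
          show "set_mset (fX M' ?t ?s) \<subseteq> {..N2}" using F by auto
          show "count (fX M' ?t ?s) x \<le> B" for x using count_fX[of M' ?t ?s x] cB(2)[of x] by linarith
          show "card (set_mset (fX M' ?t ?s)) = h - 2" using cardX F(1) by simp
          show "sum_mset (fX M' ?t ?s) \<le> N2" using sum_fX[of ?t ?s M'] k F by linarith
        qed
        moreover have "set_mset (fX M ?t ?s) = set_mset (fX M' ?t ?s)" using F(1) by simp
        moreover have "count M ?t \<in> {1..B}" "count M ?s \<in> {1..B}" "count M' ?t \<in> {1..B}" "count M' ?s \<in> {1..B}"
          using k F(1) cB by (auto simp: Suc_le_eq)
        ultimately show "G p \<in> ?Tg" unfolding G_def pe DomC_def by auto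
      qed
      show "(\<lambda>(M,M'). \<Prod>x\<in>set_mset M \<union> set_mset M'. ww a x) p \<le> ?F (G p)" if pF: "p \<in> ?Fb" for p
      proof -
        obtain M M' where pe: "p = (M,M')" by (cases p)
        note k = key[OF pF[unfolded pe]] and F = Fib_facts[OF pF[unfolded pe] h]
        let ?t = "tt (M,M')" and ?s = "ss (M,M')"
        have "(\<Prod>x\<in>set_mset M. ww a x) = ww a ?t * (\<Prod>x\<in>set_mset M - {?t}. ww a x)"
          using k by (simp add: prod.remove)
        also have "(\<Prod>x\<in>set_mset M - {?t}. ww a x) = ww a ?s * (\<Prod>x\<in>set_mset M - {?t} - {?s}. ww a x)"
          using k by (intro prod.remove) auto
        also have "set_mset M - {?t} - {?s} = set_mset (fX M ?t ?s)" by auto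
        finally have pe2: "(\<Prod>x\<in>set_mset M. ww a x) = ww a ?t * (ww a ?s * ?P (fX M ?t ?s))" .
        have "ww a ?s * ?P (fX M ?t ?s) \<le> 1 * ?P (fX M ?t ?s)"
          using a by (intro mult_right_mono ww_le1 Pnn) auto
        moreover have "ww a ?t \<le> c0" unfolding c0_def
          by (rule ww_Max_bound) (use a B k F in auto)
        ultimately have "(\<Prod>x\<in>set_mset M. ww a x) \<le> c0 * ?P (fX M ?t ?s)"
          unfolding pe2 by (intro mult_mono) (auto simp: ww_nonneg Pnn c0nn intro!: mult_nonneg_nonneg prod_nonneg)
        then show ?thesis unfolding pe G_def using F(1) by simp
      qed
      show "0 \<le> ?F t" if "t \<in> ?Tg" for t by (cases t) (simp add: c0nn Pnn)
    qed
    also have "sum ?F ?Tg = real (B^4) * (c0 * (\<Sum>pq\<in>DomC B N1 N2 (h-2). ?P (fst pq)))"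
      by (simp add: sum.cartesian_product[symmetric] sum_distrib_left card_cartesian_product power4_eq_xxxx mult.assoc)
    also have "\<dots> \<le> real (B^4) * (c0 * (real (B^(h-2)) * SL B a N1 (h-2) 0))"
    proof (intro mult_left_mono c0nn)
      have D: "DomC B N1 N2 (h-2) = {(p,q). p \<in> DD B N1 (h-2) \<and> q \<in> DD B N2 (h-2) \<and> set_mset p = set_mset q}"
        unfolding DomC_def ..
      have "(\<Sum>pq\<in>DomC B N1 N2 (h-2). ?P (fst pq)) = (\<Sum>(p,q)\<in>DomC B N1 N2 (h-2). ?P p)"
        by (simp add: case_prod_beta)
      also have "\<dots> \<le> real (B^(h-2)) * (\<Sum>p\<in>DD B N1 (h-2). ?P p)"
        unfolding D by (rule pair_sum_le1[OF finite_DD finite_DD]) (auto simp: DD_def Fin_def Pnn)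
      also have "(\<Sum>p\<in>DD B N1 (h-2). ?P p) = SL B a N1 (h-2) 0"
        unfolding SL_def by simp
      finally show "(\<Sum>pq\<in>DomC B N1 N2 (h-2). ?P (fst pq)) \<le> real (B^(h-2)) * SL B a N1 (h-2) 0" .
    qed simp
    also have "\<dots> \<le> real (B^4) * (c0 * (real (B^(h-2)) * (Ks * (real N1 + 1) powr (real (h-2) * (1-a) + 0))))"
      by (intro mult_left_mono c0nn Ks) auto
    also have "\<dots> = ?K * (real N1 + 1) powr (real (h-1) * (1-a) - 1)"
    proof -
      have ex: "-a + (real (h-2) * (1-a) + 0) = real (h-1) * (1-a) - 1"
        using h by (simp add: of_nat_diff algebra_simps)
      have "(real N1 + 1) powr (-a) * (real N1 + 1) powr (real (h-2) * (1-a) + 0) = (real N1 + 1) powr (real (h-1) * (1-a) - 1)"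
        by (subst powr_add[symmetric]) (simp only: ex)
      then show ?thesis unfolding c0_def by (simp add: mult_ac)
    qed
    finally show "(\<Sum>(M,M')\<in>?Fb. \<Prod>x\<in>set_mset M \<union> set_mset M'. ww a x) \<le> ?K * (real N1 + 1) powr (real (h-1) * (1-a) - 1)" .
  qed
qed

lemma expo_facts:
  fixes H eta dl q :: real
  assumes H: "2 \<le> H" and eta: "0 < eta" "eta < 1/H" and dl: "dl = eta / (2*H+1)" and q: "q = 1/H + dl"
  shows "0 < dl" "0 < q" "q < 1"
    "\<And>k::real. k \<le> H - 1 \<Longrightarrow> k * q - 1 + dl \<le> 0"
    "\<And>k::real. k \<le> 2*H - 1 \<Longrightarrow> k * q - 2 + 2*dl \<le> -1/H + eta"
    "\<And>k::real. k \<le> H - 1 \<Longrightarrow> k * q - 1 + dl \<le> -1/H + eta"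
    "(H - 1) * q - 1 \<le> -1/H + eta"
    "-1/H + eta < 0"
proof -
  have Hp: "0 < H" using H by simp
  show dp: "0 < dl" unfolding dl using eta H by simp
  show qp: "0 < q" unfolding q using Hp dp by (simp add: add_pos_pos)
  have Heta: "H * eta < 1" using eta Hp by (simp add: field_simps)
  have H2: "1/H \<le> 1/2" using H by (intro divide_left_mono) auto
  have Hdl: "H * dl \<le> 1/H"
  proof -
    have "H * dl = H * eta / (2*H+1)" unfolding dl by simp
    also have "\<dots> \<le> 1 / (2*H+1)" using Heta H by (intro divide_right_mono) auto
    also have "\<dots> \<le> 1 / H" using Hp by (intro divide_left_mono) auto
    finally show ?thesis .
  qed
  have dl1: "dl \<le> 1/4"
  proof -
    have "2*dl \<le> H*dl" using H dp by (intro mult_right_mono) auto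
    then show ?thesis using Hdl H2 by linarith
  qed
  show "q < 1" unfolding q using dl1 H2 by linarith
  have qH: "(H - 1) * q = 1 - 1/H + (H - 1) * dl" unfolding q using Hp by (simp add: field_simps)
  have q2H: "(2*H - 1) * q = 2 - 1/H + (2*H - 1) * dl" unfolding q using Hp by (simp add: field_simps)
  have eta_eq: "eta = (2*H+1) * dl" unfolding dl using H by simp
  have e1: "(H - 1) * dl = H * dl - dl" by (simp add: algebra_simps)
  have e2: "(2*H - 1) * dl = (2*H+1)*dl - 2*dl" by (simp add: algebra_simps)
  have e3: "H * dl \<le> (2*H+1)*dl" using dp H by (intro mult_right_mono) auto
  show "k * q - 1 + dl \<le> 0" if "k \<le> H - 1" for k
  proof -
    have "k * q \<le> (H - 1) * q" using that qp by (intro mult_right_mono) auto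
    then show ?thesis using qH Hdl e1 by linarith
  qed
  show "k * q - 2 + 2*dl \<le> -1/H + eta" if "k \<le> 2*H - 1" for k
  proof -
    have "k * q \<le> (2*H - 1) * q" using that qp by (intro mult_right_mono) auto
    then show ?thesis using q2H eta_eq e2 by linarith
  qed
  show "k * q - 1 + dl \<le> -1/H + eta" if "k \<le> H - 1" for k
  proof -
    have "k * q \<le> (H - 1) * q" using that qp by (intro mult_right_mono) auto
    then show ?thesis using qH eta_eq e1 e3 by linarith
  qed
  show "(H - 1) * q - 1 \<le> -1/H + eta"
    using qH eta_eq e1 e3 dp by linarith
  show "-1/H + eta < 0" using eta by simp
qed

lemma card_split: "finite A \<Longrightarrow> card A = card (A \<inter> B) + card (A - B)"
  by (rule card_Int_Diff)

lemma PD_cards: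
  assumes "(M,M') \<in> PD h B N1 N2"
  shows "1 \<le> card (set_mset M \<inter> set_mset M')"
    "card (set_mset M \<inter> set_mset M') + card (set_mset M - set_mset M') \<le> h"
    "card (set_mset M \<inter> set_mset M') + card (set_mset M' - set_mset M) \<le> h"
proof -
  from assms have M: "card (set_mset M) \<le> h" and M': "card (set_mset M') \<le> h" and ne: "set_mset M \<inter> set_mset M' \<noteq> {}"
    unfolding PD_def Mu_def by auto
  show "1 \<le> card (set_mset M \<inter> set_mset M')" using ne by (simp add: Suc_le_eq card_gt_0_iff)
  show "card (set_mset M \<inter> set_mset M') + card (set_mset M - set_mset M') \<le> h"
    using M card_split[of "set_mset M" "set_mset M'"] by simp
  show "card (set_mset M \<inter> set_mset M') + card (set_mset M' - set_mset M) \<le> h"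
    using M' card_split[of "set_mset M'" "set_mset M"] by (simp add: Int_commute)
qed

lemma KEY:
  assumes h: "2 \<le> h" and B: "1 \<le> B" and eta: "0 < eta" "eta < 1 / real h"
    and dl: "dl = eta / (2 * real h + 1)" and a: "a = 1 - 1 / real h - dl"
  shows "\<exists>K\<ge>0. \<forall>N1 N2. N1 \<le> N2 \<longrightarrow>
    (\<Sum>(M,M')\<in>PD h B N1 N2. \<Prod>x\<in>set_mset M \<union> set_mset M'. ww a x) \<le> K * (real N1 + 1) powr (-1 / real h + eta)"
proof -
  define H where "H = real h"
  define q where "q = 1 / H + dl"
  have H: "2 \<le> H" using h unfolding H_def by simp
  note EF = expo_facts[OF H eta[folded H_def] dl[folded H_def] q_def]
  have qa: "1 - a = q" unfolding a q_def H_def by simp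
  have a01: "0 < a" "a < 1" using EF(2,3) qa by auto
  define e where "e = -1 / real h + eta"
  let ?T3 = "{..h} \<times> {..h} \<times> {..h}"
  have fib: "\<exists>K\<ge>0. \<forall>N1 N2. N1 \<le> N2 \<longrightarrow>
      (\<Sum>(M,M')\<in>Fib h B N1 N2 rc ra rb. \<Prod>x\<in>set_mset M \<union> set_mset M'. ww a x) \<le> K * (real N1 + 1) powr e"
    for rc ra rb
  proof (cases "1 \<le> rc \<and> rc + ra \<le> h \<and> rc + rb \<le> h")
    case False
    have "Fib h B N1 N2 rc ra rb = {}" for N1 N2
      using False PD_cards unfolding Fib_def by fastforce
    then show ?thesis by (intro exI[of _ 0]) auto
  next
    case True
    then have rc1: "1 \<le> rc" and rca: "rc + ra \<le> h" and rcb: "rc + rb \<le> h" by auto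
    show ?thesis
    proof (cases "rc = h \<and> ra = 0 \<and> rb = 0")
      case True
      obtain K where K: "K \<ge> 0" "\<forall>N1 N2. N1 \<le> N2 \<longrightarrow>
          (\<Sum>(M,M')\<in>Fib h B N1 N2 h 0 0. \<Prod>x\<in>set_mset M \<union> set_mset M'. ww a x)
            \<le> K * (real N1 + 1) powr (real (h-1) * (1-a) - 1)"
        using SP[OF a01 B h] by blast
      have ex: "real (h-1) * (1-a) - 1 \<le> e" unfolding e_def qa using EF(7) h unfolding H_def by (simp add: of_nat_diff)
      show ?thesis
      proof (intro exI[of _ K] conjI allI impI)
        fix N1 N2 :: nat assume "N1 \<le> N2"
        then have "(\<Sum>(M,M')\<in>Fib h B N1 N2 rc ra rb. \<Prod>x\<in>set_mset M \<union> set_mset M'. ww a x)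
            \<le> K * (real N1 + 1) powr (real (h-1) * (1-a) - 1)" using K True by auto
        also have "\<dots> \<le> K * (real N1 + 1) powr e" using K ex by (intro mult_left_mono powr_mono) auto
        finally show "(\<Sum>(M,M')\<in>Fib h B N1 N2 rc ra rb. \<Prod>x\<in>set_mset M \<union> set_mset M'. ww a x) \<le> K * (real N1 + 1) powr e" .
      qed (use K in auto)
    next
      case False
      have rch: "rc \<le> h - 1" using False rca rcb by auto
      define al where "al = real ra * (1-a) - 1 + dl"
      define be where "be = real rb * (1-a) - 1 + dl"
      define gm where "gm = max (al + be) (-1 + dl)"
      have ral: "real ra \<le> H - 1" using rca rc1 unfolding H_def by linarith
      have rbl: "real rb \<le> H - 1" using rcb rc1 unfolding H_def by linarith
      have rcl: "real rc \<le> H - 1" using rch h unfolding H_def by linarith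
      have al0: "real ra * (1-a) - 1 + dl \<le> 0" using EF(4)[OF ral] qa by simp
      have be0: "real rb * (1-a) - 1 + dl \<le> 0" using EF(4)[OF rbl] qa by simp
      have Ee: "real rc * (1-a) + gm \<le> e"
      proof (cases "al + be \<le> -1 + dl")
        case True
        then have "gm = -1 + dl" unfolding gm_def by simp
        then show ?thesis using EF(6)[OF rcl] qa unfolding e_def H_def by simp
      next
        case False
        then have "gm = al + be" unfolding gm_def by simp
        moreover have "real (rc + ra + rb) \<le> 2 * H - 1" using rca rcb rc1 unfolding H_def by linarith
        moreover have "real rc * (1-a) + (al + be) = real (rc + ra + rb) * q - 2 + 2*dl"
          unfolding al_def be_def qa by (simp add: algebra_simps)
        ultimately show ?thesis using EF(5)[of "real (rc + ra + rb)"] unfolding e_def H_def by linarith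
      qed
      have E0: "real rc * (1-a) + gm \<le> 0" using Ee EF(8) unfolding e_def H_def by linarith
      obtain K where K: "K \<ge> 0" "\<forall>N1 N2. N1 \<le> N2 \<longrightarrow>
          (\<Sum>(p,q)\<in>DomC B N1 N2 rc. (\<Prod>x\<in>set_mset p. ww a x) * (WW B a (N1 - sum_mset p) ra * WW B a (N2 - sum_mset q) rb))
            \<le> K * (real N1 + 1) powr (real rc * (1-a) + gm)"
        using GB[OF a01 B EF(1) al0 be0 _ _ E0] unfolding gm_def al_def be_def by fastforce
      show ?thesis
      proof (intro exI[of _ K] conjI allI impI)
        fix N1 N2 :: nat assume N: "N1 \<le> N2"
        have "(\<Sum>(M,M')\<in>Fib h B N1 N2 rc ra rb. \<Prod>x\<in>set_mset M \<union> set_mset M'. ww a x)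
            \<le> (\<Sum>(p,q)\<in>DomC B N1 N2 rc. (\<Prod>x\<in>set_mset p. ww a x) * (WW B a (N1 - sum_mset p) ra * WW B a (N2 - sum_mset q) rb))"
          by (rule GR)
        also have "\<dots> \<le> K * (real N1 + 1) powr (real rc * (1-a) + gm)" using K N by auto
        also have "\<dots> \<le> K * (real N1 + 1) powr e" using K Ee by (intro mult_left_mono powr_mono) auto
        finally show "(\<Sum>(M,M')\<in>Fib h B N1 N2 rc ra rb. \<Prod>x\<in>set_mset M \<union> set_mset M'. ww a x) \<le> K * (real N1 + 1) powr e" .
      qed (use K in auto)
    qed
  qed
  have "\<forall>t\<in>?T3. \<exists>K\<ge>0. \<forall>N1 N2. N1 \<le> N2 \<longrightarrow>
      (\<Sum>(M,M')\<in>Fib h B N1 N2 (fst t) (fst (snd t)) (snd (snd t)). \<Prod>x\<in>set_mset M \<union> set_mset M'. ww a x) \<le> K * (real N1 + 1) powr e"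
    using fib by blast
  then obtain Kf where Kf: "\<And>t. t \<in> ?T3 \<Longrightarrow> Kf t \<ge> 0 \<and> (\<forall>N1 N2. N1 \<le> N2 \<longrightarrow>
      (\<Sum>(M,M')\<in>Fib h B N1 N2 (fst t) (fst (snd t)) (snd (snd t)). \<Prod>x\<in>set_mset M \<union> set_mset M'. ww a x) \<le> Kf t * (real N1 + 1) powr e)"
    by metis
  show ?thesis
  proof (intro exI[of _ "sum Kf ?T3"] conjI allI impI)
    show "0 \<le> sum Kf ?T3" using Kf by (intro sum_nonneg) auto
    fix N1 N2 :: nat assume N: "N1 \<le> N2"
    let ?g = "\<lambda>(M,M'). (card (set_mset M \<inter> set_mset M'), card (set_mset M - set_mset M'), card (set_mset M' - set_mset M))"
    let ?f = "\<lambda>(M,M'). \<Prod>x\<in>set_mset M \<union> set_mset M'. ww a x"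
    have gT: "?g ` PD h B N1 N2 \<subseteq> ?T3"
    proof (rule image_subsetI)
      fix p assume "p \<in> PD h B N1 N2"
      then obtain M M' where pe: "p = (M,M')" and pp: "(M,M') \<in> PD h B N1 N2" by (cases p) auto
      note c = PD_cards[OF pp]
      show "?g p \<in> ?T3" unfolding pe using c by auto
    qed
    have "sum ?f (PD h B N1 N2) = (\<Sum>t\<in>?T3. sum ?f {p \<in> PD h B N1 N2. ?g p = t})"
      by (rule sum.group[symmetric]) (use gT finite_PD in auto)
    also have "\<dots> = (\<Sum>t\<in>?T3. sum ?f (Fib h B N1 N2 (fst t) (fst (snd t)) (snd (snd t))))"
      by (intro sum.cong refl arg_cong[where f = "sum ?f"]) (auto simp: Fib_def)
    also have "\<dots> \<le> (\<Sum>t\<in>?T3. Kf t * (real N1 + 1) powr e)"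
      using Kf N by (intro sum_mono) auto
    also have "\<dots> = sum Kf ?T3 * (real N1 + 1) powr e" by (simp add: sum_distrib_right)
    finally show "(\<Sum>(M,M')\<in>PD h B N1 N2. \<Prod>x\<in>set_mset M \<union> set_mset M'. ww a x) \<le> sum Kf ?T3 * (real N1 + 1) powr (-1 / real h + eta)"
      unfolding e_def .
  qed
qed

lemma cconst_nonneg: "0 < h \<Longrightarrow> \<epsilon> < 1 \<Longrightarrow> 0 \<le> cconst h b \<epsilon>"
  unfolding cconst_def by (intro divide_nonneg_nonneg mult_nonneg_nonneg) auto

lemma Pr_sub_prod:
  assumes "finite T" "\<epsilon> < 1" "0 < h"
  shows "Pr_sub h b \<epsilon> T = (\<Prod>x\<in>T. pr_in h b \<epsilon> x)"
proof -
  let ?M = "\<lambda>x. measure_pmf (bernoulli_pmf (pr_in h b \<epsilon> x))"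
  interpret product_prob_space ?M UNIV
    by unfold_locales
  have r: "0 \<le> pr_in h b \<epsilon> x \<and> pr_in h b \<epsilon> x \<le> 1" for x
    unfolding pr_in_def using cconst_nonneg[OF assms(3,2), of b]
    by (auto intro!: divide_nonneg_nonneg mult_nonneg_nonneg)
  have "{\<omega> \<in> space (randset h b \<epsilon>). \<forall>x\<in>T. \<omega> x} = {\<omega> \<in> space (Pi\<^sub>M UNIV ?M). \<forall>x\<in>T. \<omega> x \<in> {True}}"
    unfolding randset_def by auto
  then have "Pr_sub h b \<epsilon> T = measure (Pi\<^sub>M UNIV ?M) {\<omega> \<in> space (Pi\<^sub>M UNIV ?M). \<forall>x\<in>T. \<omega> x \<in> {True}}"
    unfolding Pr_sub_def randset_def by simp
  also have "\<dots> = enn2real (\<Prod>x\<in>T. emeasure (?M x) {True})"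
    unfolding measure_def using assms by (subst emeasure_PiM_Collect) auto
  also have "\<dots> = (\<Prod>x\<in>T. pr_in h b \<epsilon> x)"
    using r by (simp add: emeasure_pmf_single prod_ennreal prod_nonneg)
  finally show ?thesis .
qed

lemma ln_le_powr:
  fixes x e :: real assumes "1 \<le> x" "0 < e"
  shows "ln x \<le> x powr e / e"
proof -
  have "ln (x powr e) \<le> x powr e - 1" using assms by (intro ln_le_minus_one) auto
  moreover have "ln (x powr e) = e * ln x" using assms by (simp add: ln_powr)
  ultimately have "e * ln x \<le> x powr e" by linarith
  then show ?thesis using assms by (simp add: pos_le_divide_eq mult.commute)
qed

lemma pr_bound:
  assumes h: "0 < h" and dl: "0 < dl" and eps: "\<epsilon> < 1" and a: "a = 1 - 1/real h - dl" and a0: "0 \<le> a"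
  shows "\<exists>Cw\<ge>1. \<forall>x. pr_in h b \<epsilon> x \<le> Cw * ww a x"
proof -
  define c where "c = cconst h b \<epsilon>"
  have c0: "0 \<le> c" unfolding c_def using cconst_nonneg[OF h eps] .
  define e where "e = real h * dl"
  have e0: "0 < e" unfolding e_def using h dl by simp
  define c' where "c' = c / e powr (1 / real h)"
  have c'0: "0 \<le> c'" unfolding c'_def using c0 by simp
  define Cw where "Cw = max 1 (c' * 2 powr a)"
  show ?thesis
  proof (intro exI[of _ Cw] conjI allI)
    show "1 \<le> Cw" unfolding Cw_def by simp
    fix x :: nat
    show "pr_in h b \<epsilon> x \<le> Cw * ww a x"
    proof (cases "x = 0")
      case True
      then show ?thesis unfolding Cw_def by (simp add: pr_in_def ww_def)
    next
      case False
      then have x1: "1 \<le> real x" by simp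
      have lnx: "0 \<le> ln (real x)" using x1 by simp
      have "pr_in h b \<epsilon> x \<le> c * (real x * ln (real x)) powr (1 / real h) / real x"
        using False unfolding pr_in_def c_def by simp
      also have "(real x * ln (real x)) powr (1 / real h) = real x powr (1 / real h) * ln (real x) powr (1 / real h)"
        using lnx x1 by (auto intro: powr_mult)
      also have "ln (real x) powr (1 / real h) \<le> (real x powr e / e) powr (1 / real h)"
        using lnx ln_le_powr[OF x1 e0] by (intro powr_mono2) auto
      also have "(real x powr e / e) powr (1 / real h) = real x powr dl / e powr (1 / real h)"
      proof -
        have "(real x powr e / e) powr (1 / real h) = (real x powr e) powr (1 / real h) / e powr (1 / real h)"
          using e0 by (simp add: powr_divide)
        also have "(real x powr e) powr (1 / real h) = real x powr dl"
          unfolding powr_powr e_def using h by simp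
        finally show ?thesis .
      qed
      finally have "pr_in h b \<epsilon> x \<le> c * (real x powr (1 / real h) * (real x powr dl / e powr (1 / real h))) / real x"
        using c0 x1 by (simp add: divide_right_mono mult_left_mono)
      also have "\<dots> = c' * (real x powr (1 / real h) * real x powr dl / real x)"
        unfolding c'_def by (simp add: field_simps)
      also have "real x powr (1 / real h) * real x powr dl / real x = real x powr (-a)"
      proof -
        have p1: "real x powr (1 / real h) * real x powr dl = real x powr (1 / real h + dl)"
          by (rule powr_add[symmetric])
        have p4: "real x powr 1 = real x" by (rule powr_one) simp
        have "real x powr (1 / real h) * real x powr dl / real x = real x powr (1 / real h + dl) / real x powr 1"
          unfolding p1 p4 ..
        also have "\<dots> = real x powr (1 / real h + dl - 1)" by (rule powr_diff[symmetric])
        also have "1 / real h + dl - 1 = -a" using a by simp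
        finally show ?thesis .
      qed
      also have "real x powr (-a) \<le> 2 powr a * (real x + 1) powr (-a)"
      proof -
        have "(2 * real x) powr (-a) \<le> (real x + 1) powr (-a)" using x1 a0 by (intro powr_mono2') auto
        moreover have "(2 * real x) powr (-a) = 2 powr (-a) * real x powr (-a)" using x1 by (simp add: powr_mult)
        ultimately have "2 powr a * (2 powr (-a) * real x powr (-a)) \<le> 2 powr a * (real x + 1) powr (-a)"
          by (intro mult_left_mono) auto
        moreover have "2 powr a * (2 powr (-a) * real x powr (-a)) = real x powr (-a)"
          by (simp add: powr_minus field_simps)
        ultimately show ?thesis by simp
      qed
      finally have "pr_in h b \<epsilon> x \<le> c' * (2 powr a * ww a x)" using c'0 by (simp add: ww_def mult_left_mono)
      also have "\<dots> \<le> Cw * ww a x" unfolding Cw_def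
        by (simp add: mult.assoc[symmetric] mult_right_mono ww_nonneg)
      finally show ?thesis .
    qed
  qed
qed

lemma pr_nonneg: "0 < h \<Longrightarrow> \<epsilon> < 1 \<Longrightarrow> 0 \<le> pr_in h b \<epsilon> x"
  unfolding pr_in_def using cconst_nonneg[of h \<epsilon> b]
  by (auto intro!: divide_nonneg_nonneg mult_nonneg_nonneg)

lemma tuple_mset:
  fixes k b :: "nat \<Rightarrow> nat"
  assumes "\<forall>i<n. b i > 0"
  shows "set_mset (\<Sum>i<n. replicate_mset (b i) (k i)) = k ` {..<n}"
    "sum_mset (\<Sum>i<n. replicate_mset (b i) (k i)) = (\<Sum>i<n. b i * k i)"
    "size (\<Sum>i<n. replicate_mset (b i) (k i)) = (\<Sum>i<n. b i)"
  using assms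
proof (induction n)
  case 0
  { case 1 show ?case by simp }
  { case 2 show ?case by simp }
  { case 3 show ?case by simp }
next
  case (Suc n)
  { case 1 then show ?case using Suc.IH(1) by (auto simp: lessThan_Suc) }
  { case 2 then show ?case using Suc.IH(2) by (simp add: sum_mset.union) }
  { case 3 then show ?case using Suc.IH(3) by simp }
qed

lemma Sset_Mu:
  assumes b: "\<forall>i<h. b i > 0" and R: "R \<in> Sset h b N"
  shows "\<exists>M. M \<in> Mu h (\<Sum>i<h. b i) N \<and> set_mset M = R"
proof -
  from R obtain k where Rk: "R = k ` {..<h}" and kN: "(\<Sum>i<h. b i * k i) = N"
    unfolding Sset_def by auto
  let ?M = "\<Sum>i<h. replicate_mset (b i) (k i)"
  note T = tuple_mset[OF b, of k]
  have "set_mset ?M \<subseteq> {..N}"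
  proof
    fix x assume "x \<in> set_mset ?M"
    then obtain i where i: "i < h" "x = k i" using T(1) by auto
    have "1 \<le> b i" using b i by (simp add: Suc_le_eq)
    then have "1 * k i \<le> b i * k i" by (rule mult_le_mono1)
    then have "k i \<le> b i * k i" by simp
    also have "\<dots> \<le> (\<Sum>i<h. b i * k i)" using i by (intro member_le_sum) auto
    finally show "x \<in> {..N}" using i kN by simp
  qed
  moreover have "card (set_mset ?M) \<le> h" unfolding T(1) using card_image_le[of "{..<h}" k] by simp
  ultimately have "?M \<in> Mu h (\<Sum>i<h. b i) N" unfolding Mu_def using T kN by simp
  then show ?thesis using T(1) Rk by blast
qed

lemma pair_reduce:
  assumes b: "\<forall>i<h. b i > 0" and h: "0 < h" and eps: "\<epsilon> < 1"
    and Cw: "1 \<le> Cw" "\<And>x. pr_in h b \<epsilon> x \<le> Cw * ww a x"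
    and P: "P \<subseteq> {(R,S). R \<in> Sset h b N1 \<and> S \<in> Sset h b N2 \<and> R \<inter> S \<noteq> {} \<and> (N1 = N2 \<longrightarrow> R \<noteq> S)}"
  shows "(\<Sum>(R,S)\<in>P. Pr_sub h b \<epsilon> (R \<union> S))
     \<le> Cw^(2*h) * (\<Sum>(M,M')\<in>PD h (\<Sum>i<h. b i) N1 N2. \<Prod>x\<in>set_mset M \<union> set_mset M'. ww a x)"
proof -
  let ?B = "\<Sum>i<h. b i"
  define mu where "mu N R = (SOME M. M \<in> Mu h ?B N \<and> set_mset M = R)" for N R
  have mu: "mu N R \<in> Mu h ?B N \<and> set_mset (mu N R) = R" if "R \<in> Sset h b N" for N R
    unfolding mu_def by (rule someI_ex[OF Sset_Mu[OF b that]])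
  let ?g = "\<lambda>(R,S). (mu N1 R, mu N2 S)"
  let ?F = "\<lambda>(M,M'). Cw^(2*h) * (\<Prod>x\<in>set_mset M \<union> set_mset M'. ww a x)"
  have "(\<Sum>(R,S)\<in>P. Pr_sub h b \<epsilon> (R \<union> S)) \<le> sum ?F (PD h ?B N1 N2)"
  proof (rule sum_le_inj[where g = ?g])
    show "finite (PD h ?B N1 N2)" by (rule finite_PD)
    show "inj_on ?g P"
    proof (rule inj_onI)
      fix p q assume pP: "p \<in> P" and qP: "q \<in> P" and eq: "?g p = ?g q"
      obtain R1 S1 where pe: "p = (R1,S1)" and R1: "R1 \<in> Sset h b N1" and S1: "S1 \<in> Sset h b N2"
        using P pP by blast
      obtain R2 S2 where qe: "q = (R2,S2)" and R2: "R2 \<in> Sset h b N1" and S2: "S2 \<in> Sset h b N2"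
        using P qP by blast
      have "mu N1 R1 = mu N1 R2" "mu N2 S1 = mu N2 S2" using eq pe qe by auto
      then have "set_mset (mu N1 R1) = set_mset (mu N1 R2)" "set_mset (mu N2 S1) = set_mset (mu N2 S2)" by auto
      then have "R1 = R2" "S1 = S2" using mu[OF R1] mu[OF R2] mu[OF S1] mu[OF S2] by auto
      then show "p = q" using pe qe by simp
    qed
    show "?g ` P \<subseteq> PD h ?B N1 N2"
    proof (rule image_subsetI)
      fix p assume "p \<in> P"
      then obtain R S where pe: "p = (R,S)" and R: "R \<in> Sset h b N1" and S: "S \<in> Sset h b N2"
        and RS: "R \<inter> S \<noteq> {}" "N1 = N2 \<longrightarrow> R \<noteq> S" using P by blast
      show "?g p \<in> PD h ?B N1 N2" unfolding pe PD_def using mu[OF R] mu[OF S] RS by auto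
    qed
    show "(\<lambda>(R,S). Pr_sub h b \<epsilon> (R \<union> S)) p \<le> ?F (?g p)" if pP: "p \<in> P" for p
    proof -
      obtain R S where pe: "p = (R,S)" and R: "R \<in> Sset h b N1" and S: "S \<in> Sset h b N2"
        using P pP by blast
      have mR: "mu N1 R \<in> Mu h ?B N1" "set_mset (mu N1 R) = R" using mu[OF R] by auto
      have mS: "mu N2 S \<in> Mu h ?B N2" "set_mset (mu N2 S) = S" using mu[OF S] by auto
      have fin: "finite (R \<union> S)" using mR(2) mS(2) by (metis finite_Un finite_set_mset)
      have cR: "card R \<le> h" "card S \<le> h" using mR mS unfolding Mu_def by auto
      have cRS: "card (R \<union> S) \<le> 2*h" using card_Un_le[of R S] cR by simp
      have "Pr_sub h b \<epsilon> (R \<union> S) = (\<Prod>x\<in>R \<union> S. pr_in h b \<epsilon> x)" by (rule Pr_sub_prod[OF fin eps h])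
      also have "\<dots> \<le> (\<Prod>x\<in>R \<union> S. Cw * ww a x)"
        by (intro prod_mono) (use Cw pr_nonneg[OF h eps] in auto)
      also have "\<dots> = Cw ^ card (R \<union> S) * (\<Prod>x\<in>R \<union> S. ww a x)" by (simp add: prod.distrib)
      also have "\<dots> \<le> Cw ^ (2*h) * (\<Prod>x\<in>R \<union> S. ww a x)"
        using Cw cRS by (intro mult_right_mono power_increasing) (auto simp: prod_nonneg ww_nonneg)
      finally show ?thesis unfolding pe using mR(2) mS(2) by simp
    qed
    show "0 \<le> ?F t" for t using Cw by (cases t) (auto simp: prod_nonneg ww_nonneg)
  qed
  also have "\<dots> = Cw^(2*h) * (\<Sum>(M,M')\<in>PD h ?B N1 N2. \<Prod>x\<in>set_mset M \<union> set_mset M'. ww a x)"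
    by (simp add: sum_distrib_left case_prod_beta)
  finally show ?thesis .
qed

theorem mainTheorem15:
  fixes h :: nat and b :: "nat \<Rightarrow> nat" and \<epsilon> :: real
  assumes "h \<ge> 2"
    and "\<forall>i<h. b i > 0"
    and "Gcd (b ` {..<h}) = 1"
    and "0 < \<epsilon>" and "\<epsilon> < 1/2"
  shows "\<forall>\<eta>>0. \<exists>K::real. \<forall>n m :: nat. 2 \<le> n \<longrightarrow> n < m \<longrightarrow>
     Delta h b \<epsilon> n m \<le> K * ((1 + real (m - n) powr (- 1 / real h + \<eta>)) * real n powr (- 1 / real h + \<eta>)
                           + real m powr (- 1 / real h + \<eta>))"
proof (intro allI impI)
  fix \<eta> :: real assume \<eta>: "\<eta> > 0"
  have h2: "2 \<le> h" and hpos: "0 < h" using assms(1) by auto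
  have bpos: "\<forall>i<h. b i > 0" using assms(2) .
  have eps1: "\<epsilon> < 1" using assms(5) by simp
  define eta where "eta = (if \<eta> < 1 / real h then \<eta> else 1 / (2 * real h))"
  have h1: "1 / (2 * real h) < 1 / real h" using hpos by (intro divide_strict_left_mono) auto
  have eta1: "0 < eta" unfolding eta_def using \<eta> hpos by auto
  have eta2: "eta < 1 / real h" unfolding eta_def using h1 by auto
  note eta = eta1 eta2
  define dl where "dl = eta / (2 * real h + 1)"
  define a where "a = 1 - 1 / real h - dl"
  define Bt where "Bt = (\<Sum>i<h. b i)"
  have Bt: "1 \<le> Bt"
  proof -
    have "b 0 \<le> Bt" unfolding Bt_def using hpos by (intro member_le_sum) auto
    moreover have "1 \<le> b 0" using bpos hpos by (simp add: Suc_le_eq)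
    ultimately show ?thesis by linarith
  qed
  have EF: "0 < dl" "0 < 1 / real h + dl" "1 / real h + dl < 1" "-1 / real h + eta < 0"
    using expo_facts[of "real h" eta dl "1 / real h + dl"] h2 eta dl_def by auto
  have a0: "0 \<le> a" unfolding a_def using EF by simp
  obtain K where K: "K \<ge> 0" "\<And>N1 N2. N1 \<le> N2 \<Longrightarrow>
      (\<Sum>(M,M')\<in>PD h Bt N1 N2. \<Prod>x\<in>set_mset M \<union> set_mset M'. ww a x) \<le> K * (real N1 + 1) powr (-1 / real h + eta)"
    using KEY[OF h2 Bt eta dl_def a_def] by blast
  obtain Cw where Cw: "1 \<le> Cw" "\<And>x. pr_in h b \<epsilon> x \<le> Cw * ww a x"
    using pr_bound[OF hpos EF(1) eps1 a_def a0, of b] by blast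
  define e' where "e' = -1 / real h + eta"
  define KS where "KS N1 N2 = (\<Sum>(M,M')\<in>PD h Bt N1 N2. \<Prod>x\<in>set_mset M \<union> set_mset M'. ww a x)" for N1 N2
  define K0 where "K0 = 4 * Cw^(2*h) * K"
  have K0: "0 \<le> K0" unfolding K0_def using K Cw by simp
  show "\<exists>K. \<forall>n m :: nat. 2 \<le> n \<longrightarrow> n < m \<longrightarrow>
     Delta h b \<epsilon> n m \<le> K * ((1 + real (m - n) powr (- 1 / real h + \<eta>)) * real n powr (- 1 / real h + \<eta>)
                           + real m powr (- 1 / real h + \<eta>))"
  proof (intro exI[of _ K0] allI impI)
    fix n m :: nat assume n2: "2 \<le> n" and nm: "n < m"
    have red: "(\<Sum>(R,S)\<in>P. Pr_sub h b \<epsilon> (R \<union> S)) \<le> Cw^(2*h) * KS N1 N2"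
      if "P \<subseteq> {(R,S). R \<in> Sset h b N1 \<and> S \<in> Sset h b N2 \<and> R \<inter> S \<noteq> {} \<and> (N1 = N2 \<longrightarrow> R \<noteq> S)}" for P N1 N2
      unfolding KS_def Bt_def by (rule pair_reduce[OF bpos hpos eps1 Cw that])
    let ?P = "(real n + 1) powr e'"
    have Pnn: "0 \<le> ?P" by simp
    have Cwp: "0 \<le> Cw^(2*h)" using Cw by simp
    have s1: "(\<Sum>(R, S) \<in> {(R, S). R \<in> Sset h b n \<and> S \<in> Sset h b n \<and> R \<noteq> S \<and> R \<inter> S \<noteq> {}}. Pr_sub h b \<epsilon> (R \<union> S))
        \<le> Cw^(2*h) * (K * ?P)"
    proof -
      have "(\<Sum>(R, S) \<in> {(R, S). R \<in> Sset h b n \<and> S \<in> Sset h b n \<and> R \<noteq> S \<and> R \<inter> S \<noteq> {}}. Pr_sub h b \<epsilon> (R \<union> S))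
          \<le> Cw^(2*h) * KS n n" by (rule red) blast
      also have "\<dots> \<le> Cw^(2*h) * (K * ?P)" unfolding KS_def e'_def using K(2)[of n n] Cwp by (intro mult_left_mono) auto
      finally show ?thesis .
    qed
    have s2: "(\<Sum>(R, S) \<in> {(R, S). R \<in> Sset h b n \<and> S \<in> Sset h b m \<and> R \<inter> S \<noteq> {}}. Pr_sub h b \<epsilon> (R \<union> S))
        \<le> Cw^(2*h) * (K * ?P)"
    proof -
      have "(\<Sum>(R, S) \<in> {(R, S). R \<in> Sset h b n \<and> S \<in> Sset h b m \<and> R \<inter> S \<noteq> {}}. Pr_sub h b \<epsilon> (R \<union> S))
          \<le> Cw^(2*h) * KS n m" by (rule red) (use nm in auto)
      also have "\<dots> \<le> Cw^(2*h) * (K * ?P)" unfolding KS_def e'_def using K(2)[of n m] nm Cwp by (intro mult_left_mono) auto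
      finally show ?thesis .
    qed
    have s3: "(\<Sum>(R, S) \<in> {(R, S). R \<in> Sset h b m \<and> S \<in> Sset h b m \<and> R \<noteq> S \<and> R \<inter> S \<noteq> {}}. Pr_sub h b \<epsilon> (R \<union> S))
        \<le> Cw^(2*h) * (K * ?P)"
    proof -
      have "(\<Sum>(R, S) \<in> {(R, S). R \<in> Sset h b m \<and> S \<in> Sset h b m \<and> R \<noteq> S \<and> R \<inter> S \<noteq> {}}. Pr_sub h b \<epsilon> (R \<union> S))
          \<le> Cw^(2*h) * KS m m" by (rule red) blast
      also have "\<dots> \<le> Cw^(2*h) * (K * (real m + 1) powr e')" unfolding KS_def e'_def using K(2)[of m m] Cwp by (intro mult_left_mono) auto
      also have "\<dots> \<le> Cw^(2*h) * (K * ?P)"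
        using nm EF(4) K Cwp unfolding e'_def by (intro mult_left_mono powr_mono2') auto
      finally show ?thesis .
    qed
    have D0: "Delta h b \<epsilon> n m \<le> 4 * (Cw^(2*h) * (K * ?P))"
      unfolding Delta_def using s1 s2 s3 by linarith
    have "4 * (Cw^(2*h) * (K * ?P)) = K0 * ?P" unfolding K0_def by (simp only: mult_ac)
    then have D: "Delta h b \<epsilon> n m \<le> K0 * ?P" using D0 by (simp only:)
    have Pn: "?P \<le> real n powr e'" using n2 EF(4) unfolding e'_def by (intro powr_mono2') auto
    have "K0 * ?P \<le> K0 * real n powr e'" using Pn K0 by (rule mult_left_mono)
    then have DK: "Delta h b \<epsilon> n m \<le> K0 * real n powr e'" using D by linarith
    let ?e = "- 1 / real h + \<eta>"
    let ?br = "(1 + real (m - n) powr ?e) * real n powr ?e + real m powr ?e"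
    show "Delta h b \<epsilon> n m \<le> K0 * ?br"
    proof (cases "\<eta> < 1 / real h")
      case True
      then have "e' = ?e" unfolding e'_def eta_def by simp
      moreover have "real n powr ?e \<le> ?br"
      proof -
        have "1 * real n powr ?e \<le> (1 + real (m - n) powr ?e) * real n powr ?e" by (intro mult_right_mono) auto
        moreover have "0 \<le> real m powr ?e" by simp
        ultimately show ?thesis by linarith
      qed
      ultimately have "real n powr e' \<le> ?br" by simp
      then have "K0 * real n powr e' \<le> K0 * ?br" using K0 by (rule mult_left_mono)
      then show ?thesis using DK by linarith
    next
      case False
      then have e0: "0 \<le> ?e" by simp
      have "real n powr e' \<le> real n powr 0" using n2 EF(4) unfolding e'_def by (intro powr_mono) auto
      then have "real n powr e' \<le> 1" using n2 by simp
      moreover have "1 \<le> real n powr ?e" using n2 e0 by (intro ge_one_powr_ge_zero) auto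
      moreover have "real n powr ?e \<le> ?br"
      proof -
        have "1 * real n powr ?e \<le> (1 + real (m - n) powr ?e) * real n powr ?e" by (intro mult_right_mono) auto
        moreover have "0 \<le> real m powr ?e" by simp
        ultimately show ?thesis by linarith
      qed
      ultimately have "real n powr e' \<le> ?br" by linarith
      then have "K0 * real n powr e' \<le> K0 * ?br" using K0 by (rule mult_left_mono)
      then show ?thesis using DK by linarith
    qed
  qed
qed

end
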